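(* Let $A$ be a bialgebra and $\Omega(A)=(H,\triangleleft,\triangleright,f)$ an extending datum of $A$ whose right action is trivial, i.e. $h\triangleleft a=\varepsilon_A(a)h$ for all $h\in H$, $a\in A$. Then $\Omega(A)$ is a bialgebra extending structure of $A$ if and only if $H$ is an (associative) bialgebra and, for all $g,h,l\in H$ and $a,b\in A$: (a) $[g_{(1)}\triangleright(h_{(1)}\triangleright a)]\,f(g_{(2)},h_{(2)})=f(g_{(1)},h_{(1)})\,((g_{(2)}h_{(2)})\triangleright a)$ and $(g_{(1)}\triangleright f(h_{(1)},l_{(1)}))\,f(g_{(2)},h_{(2)}l_{(2)})=f(g_{(1)},h_{(1)})\,f(g_{(2)}h_{(2)},l)$; (b) $g\triangleright(ab)=(g_{(1)}\triangleright a)(g_{(2)}\triangleright b)$; (c) $g_{(1)}\otimes g_{(2)}\triangleright a=g_{(2)}\otimes g_{(1)}\triangleright a$; (d) $g_{(1)}h_{(1)}\otimes f(g_{(2)},h_{(2)})=g_{(2)}h_{(2)}\otimes f(g_{(1)},h_{(1)})$. In this case $A\ltimes H$ is the crossed product $A\#_f H$, with multiplication $(a\#h)(c\#g)=a(h_{(1)}\triangleright c)f(h_{(2)},g_{(1)})\#h_{(3)}g_{(2)}$.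
   Context: $k$ is a field; Sweedler notation is used. An extending datum of a bialgebra $A$ is a system $(H,\triangleleft,\triangleright,f)$ where $H$ is a coalgebra $(\Delta_H,\varepsilon_H)$ with a unital, not necessarily associative multiplication (written $\cdot$ or juxtaposition) and unit $1_H$ with $\Delta_H(1_H)=1_H\otimes 1_H$, and $\triangleleft:H\otimes A\to H$, $\triangleright:H\otimes A\to A$, $f:H\otimes H\to A$ are coalgebra maps satisfying $h\triangleright 1_A=\varepsilon_H(h)1_A$, $1_H\triangleright a=a$, $1_H\triangleleft a=\varepsilon_A(a)1_H$, $h\triangleleft 1_A=h$, $f(h,1_H)=f(1_H,h)=\varepsilon_H(h)1_A$. $A\ltimes H$ is $A\otimes H$ with multiplication $(a\ltimes h)\bullet(c\ltimes g)=a(h_{(1)}\triangleright c_{(1)})f(h_{(2)}\triangleleft c_{(2)},g_{(1)})\ltimes(h_{(3)}\triangleleft c_{(3)})\cdot g_{(2)}$, unit $1_A\ltimes 1_H$ and tensor product coalgebra structure; $\Omega(A)$ is a bialgebra extending structure if this is a bialgebra. *)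

theory Defs
  imports Main "HOL.Vector_Spaces"
begin

text \<open>
  A k-vector space is a type 'v of class ab_group_add together with a
  scalar multiplication s satisfying the library locale predicate vector_space s.

  An element of V1 (x) ... (x) Vn is represented by a finite list of
  n-tuples (a finite sum of simple tensors).  Two such representatives denote the same
  element of the tensor product iff they agree under every n-linear form
  V1 x ... x Vn -> k (i.e. under every element of the dual of the tensor product,
  via the universal property).  A linear map into a tensor product is a function
  returning representatives that is linear modulo this equality.  Sweedler sums are
  list comprehensions over the chosen representative of the coproduct.
\<close>

definition lin_form :: "('k::field \<Rightarrow> 'v::ab_group_add \<Rightarrow> 'v) \<Rightarrow> ('v \<Rightarrow> 'k) \<Rightarrow> bool" where
  "lin_form s \<phi> \<longleftrightarrow> Vector_Spaces.linear s (*) \<phi>"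

definition form2 :: "('k::field \<Rightarrow> 'a::ab_group_add \<Rightarrow> 'a) \<Rightarrow> ('k \<Rightarrow> 'b::ab_group_add \<Rightarrow> 'b)
    \<Rightarrow> ('a \<Rightarrow> 'b \<Rightarrow> 'k) \<Rightarrow> bool" where
  "form2 s1 s2 \<beta> \<longleftrightarrow> (\<forall>y. lin_form s1 (\<lambda>x. \<beta> x y)) \<and> (\<forall>x. lin_form s2 (\<lambda>y. \<beta> x y))"

definition form3 :: "('k::field \<Rightarrow> 'a::ab_group_add \<Rightarrow> 'a) \<Rightarrow> ('k \<Rightarrow> 'b::ab_group_add \<Rightarrow> 'b)
    \<Rightarrow> ('k \<Rightarrow> 'c::ab_group_add \<Rightarrow> 'c) \<Rightarrow> ('a \<Rightarrow> 'b \<Rightarrow> 'c \<Rightarrow> 'k) \<Rightarrow> bool" where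
  "form3 s1 s2 s3 \<beta> \<longleftrightarrow> (\<forall>y z. lin_form s1 (\<lambda>x. \<beta> x y z)) \<and> (\<forall>x z. lin_form s2 (\<lambda>y. \<beta> x y z))
      \<and> (\<forall>x y. lin_form s3 (\<lambda>z. \<beta> x y z))"

definition form4 :: "('k::field \<Rightarrow> 'a::ab_group_add \<Rightarrow> 'a) \<Rightarrow> ('k \<Rightarrow> 'b::ab_group_add \<Rightarrow> 'b)
    \<Rightarrow> ('k \<Rightarrow> 'c::ab_group_add \<Rightarrow> 'c) \<Rightarrow> ('k \<Rightarrow> 'd::ab_group_add \<Rightarrow> 'd)
    \<Rightarrow> ('a \<Rightarrow> 'b \<Rightarrow> 'c \<Rightarrow> 'd \<Rightarrow> 'k) \<Rightarrow> bool" where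
  "form4 s1 s2 s3 s4 \<beta> \<longleftrightarrow> (\<forall>y z w. lin_form s1 (\<lambda>x. \<beta> x y z w)) \<and> (\<forall>x z w. lin_form s2 (\<lambda>y. \<beta> x y z w))
      \<and> (\<forall>x y w. lin_form s3 (\<lambda>z. \<beta> x y z w)) \<and> (\<forall>x y z. lin_form s4 (\<lambda>w. \<beta> x y z w))"

definition form6 :: "('k::field \<Rightarrow> 'a::ab_group_add \<Rightarrow> 'a) \<Rightarrow> ('k \<Rightarrow> 'b::ab_group_add \<Rightarrow> 'b)
    \<Rightarrow> ('k \<Rightarrow> 'c::ab_group_add \<Rightarrow> 'c) \<Rightarrow> ('k \<Rightarrow> 'd::ab_group_add \<Rightarrow> 'd)
    \<Rightarrow> ('k \<Rightarrow> 'e::ab_group_add \<Rightarrow> 'e) \<Rightarrow> ('k \<Rightarrow> 'f::ab_group_add \<Rightarrow> 'f)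
    \<Rightarrow> ('a \<Rightarrow> 'b \<Rightarrow> 'c \<Rightarrow> 'd \<Rightarrow> 'e \<Rightarrow> 'f \<Rightarrow> 'k) \<Rightarrow> bool" where
  "form6 s1 s2 s3 s4 s5 s6 \<beta> \<longleftrightarrow>
      (\<forall>x2 x3 x4 x5 x6. lin_form s1 (\<lambda>x1. \<beta> x1 x2 x3 x4 x5 x6))
    \<and> (\<forall>x1 x3 x4 x5 x6. lin_form s2 (\<lambda>x2. \<beta> x1 x2 x3 x4 x5 x6))
    \<and> (\<forall>x1 x2 x4 x5 x6. lin_form s3 (\<lambda>x3. \<beta> x1 x2 x3 x4 x5 x6))
    \<and> (\<forall>x1 x2 x3 x5 x6. lin_form s4 (\<lambda>x4. \<beta> x1 x2 x3 x4 x5 x6))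
    \<and> (\<forall>x1 x2 x3 x4 x6. lin_form s5 (\<lambda>x5. \<beta> x1 x2 x3 x4 x5 x6))
    \<and> (\<forall>x1 x2 x3 x4 x5. lin_form s6 (\<lambda>x6. \<beta> x1 x2 x3 x4 x5 x6))"

definition teq2 :: "('k::field \<Rightarrow> 'a::ab_group_add \<Rightarrow> 'a) \<Rightarrow> ('k \<Rightarrow> 'b::ab_group_add \<Rightarrow> 'b)
    \<Rightarrow> ('a \<times> 'b) list \<Rightarrow> ('a \<times> 'b) list \<Rightarrow> bool" where
  "teq2 s1 s2 xs ys \<longleftrightarrow> (\<forall>\<beta>. form2 s1 s2 \<beta> \<longrightarrow>
      sum_list (map (\<lambda>(x1,x2). \<beta> x1 x2) xs) = sum_list (map (\<lambda>(x1,x2). \<beta> x1 x2) ys))"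

definition teq3 :: "('k::field \<Rightarrow> 'a::ab_group_add \<Rightarrow> 'a) \<Rightarrow> ('k \<Rightarrow> 'b::ab_group_add \<Rightarrow> 'b)
    \<Rightarrow> ('k \<Rightarrow> 'c::ab_group_add \<Rightarrow> 'c)
    \<Rightarrow> ('a \<times> 'b \<times> 'c) list \<Rightarrow> ('a \<times> 'b \<times> 'c) list \<Rightarrow> bool" where
  "teq3 s1 s2 s3 xs ys \<longleftrightarrow> (\<forall>\<beta>. form3 s1 s2 s3 \<beta> \<longrightarrow>
      sum_list (map (\<lambda>(x1,x2,x3). \<beta> x1 x2 x3) xs) = sum_list (map (\<lambda>(x1,x2,x3). \<beta> x1 x2 x3) ys))"

definition teq4 :: "('k::field \<Rightarrow> 'a::ab_group_add \<Rightarrow> 'a) \<Rightarrow> ('k \<Rightarrow> 'b::ab_group_add \<Rightarrow> 'b)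
    \<Rightarrow> ('k \<Rightarrow> 'c::ab_group_add \<Rightarrow> 'c) \<Rightarrow> ('k \<Rightarrow> 'd::ab_group_add \<Rightarrow> 'd)
    \<Rightarrow> ('a \<times> 'b \<times> 'c \<times> 'd) list \<Rightarrow> ('a \<times> 'b \<times> 'c \<times> 'd) list \<Rightarrow> bool" where
  "teq4 s1 s2 s3 s4 xs ys \<longleftrightarrow> (\<forall>\<beta>. form4 s1 s2 s3 s4 \<beta> \<longrightarrow>
      sum_list (map (\<lambda>(x1,x2,x3,x4). \<beta> x1 x2 x3 x4) xs)
    = sum_list (map (\<lambda>(x1,x2,x3,x4). \<beta> x1 x2 x3 x4) ys))"

definition teq6 :: "('k::field \<Rightarrow> 'a::ab_group_add \<Rightarrow> 'a) \<Rightarrow> ('k \<Rightarrow> 'b::ab_group_add \<Rightarrow> 'b)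
    \<Rightarrow> ('k \<Rightarrow> 'c::ab_group_add \<Rightarrow> 'c) \<Rightarrow> ('k \<Rightarrow> 'd::ab_group_add \<Rightarrow> 'd)
    \<Rightarrow> ('k \<Rightarrow> 'e::ab_group_add \<Rightarrow> 'e) \<Rightarrow> ('k \<Rightarrow> 'f::ab_group_add \<Rightarrow> 'f)
    \<Rightarrow> ('a \<times> 'b \<times> 'c \<times> 'd \<times> 'e \<times> 'f) list \<Rightarrow> ('a \<times> 'b \<times> 'c \<times> 'd \<times> 'e \<times> 'f) list \<Rightarrow> bool" where
  "teq6 s1 s2 s3 s4 s5 s6 xs ys \<longleftrightarrow> (\<forall>\<beta>. form6 s1 s2 s3 s4 s5 s6 \<beta> \<longrightarrow>
      sum_list (map (\<lambda>(x1,x2,x3,x4,x5,x6). \<beta> x1 x2 x3 x4 x5 x6) xs)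
    = sum_list (map (\<lambda>(x1,x2,x3,x4,x5,x6). \<beta> x1 x2 x3 x4 x5 x6) ys))"

text \<open>A vector space with (possibly non-associative) multiplication, unit, coproduct
  (given by representatives in V (x) V) and counit.\<close>

record ('k, 'v) bistr =
  scl :: "'k \<Rightarrow> 'v \<Rightarrow> 'v"
  mul :: "'v \<Rightarrow> 'v \<Rightarrow> 'v"
  one :: 'v
  cop :: "'v \<Rightarrow> ('v \<times> 'v) list"
  cou :: "'v \<Rightarrow> 'k"

definition bilin :: "('k::field \<Rightarrow> 'a::ab_group_add \<Rightarrow> 'a) \<Rightarrow> ('k \<Rightarrow> 'b::ab_group_add \<Rightarrow> 'b)
    \<Rightarrow> ('k \<Rightarrow> 'c::ab_group_add \<Rightarrow> 'c) \<Rightarrow> ('a \<Rightarrow> 'b \<Rightarrow> 'c) \<Rightarrow> bool" where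
  "bilin s1 s2 s3 m \<longleftrightarrow> (\<forall>y. Vector_Spaces.linear s1 s3 (\<lambda>x. m x y))
     \<and> (\<forall>x. Vector_Spaces.linear s2 s3 (\<lambda>y. m x y))"

text \<open>(\<Delta> \<otimes> id) \<Delta>, i.e. the Sweedler triple x(1) (x) x(2) (x) x(3).\<close>
definition cop3 :: "('k, 'v) bistr \<Rightarrow> 'v \<Rightarrow> ('v \<times> 'v \<times> 'v) list" where
  "cop3 C x = [(u1, u2, v). (u, v) \<leftarrow> cop C x, (u1, u2) \<leftarrow> cop C u]"

definition coalg :: "('k::field, 'v::ab_group_add) bistr \<Rightarrow> bool" where
  "coalg C \<longleftrightarrow> vector_space (scl C)
    \<and> (\<forall>x y. teq2 (scl C) (scl C) (cop C (x + y)) (cop C x @ cop C y))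
    \<and> (\<forall>c x. teq2 (scl C) (scl C) (cop C (scl C c x)) [(scl C c u, v). (u, v) \<leftarrow> cop C x])
    \<and> lin_form (scl C) (cou C)
    \<and> (\<forall>x. teq3 (scl C) (scl C) (scl C) (cop3 C x)
            [(u, v1, v2). (u, v) \<leftarrow> cop C x, (v1, v2) \<leftarrow> cop C v])
    \<and> (\<forall>x. sum_list [scl C (cou C u) v. (u, v) \<leftarrow> cop C x] = x)
    \<and> (\<forall>x. sum_list [scl C (cou C v) u. (u, v) \<leftarrow> cop C x] = x)"

definition alg :: "('k::field, 'v::ab_group_add) bistr \<Rightarrow> bool" where
  "alg C \<longleftrightarrow> vector_space (scl C) \<and> bilin (scl C) (scl C) (scl C) (mul C)
    \<and> (\<forall>x y z. mul C (mul C x y) z = mul C x (mul C y z))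
    \<and> (\<forall>x. mul C (one C) x = x \<and> mul C x (one C) = x)"

definition bialg :: "('k::field, 'v::ab_group_add) bistr \<Rightarrow> bool" where
  "bialg C \<longleftrightarrow> alg C \<and> coalg C
    \<and> (\<forall>x y. teq2 (scl C) (scl C) (cop C (mul C x y))
              [(mul C x1 y1, mul C x2 y2). (x1, x2) \<leftarrow> cop C x, (y1, y2) \<leftarrow> cop C y])
    \<and> teq2 (scl C) (scl C) (cop C (one C)) [(one C, one C)]
    \<and> (\<forall>x y. cou C (mul C x y) = cou C x * cou C y)
    \<and> cou C (one C) = 1"

text \<open>A linear map F : X (x) Y \<rightarrow> Z (given as a bilinear map) that is a coalgebra map,
  X (x) Y carrying the tensor product coalgebra structure.\<close>
definition coalg_map2 :: "('k::field, 'x::ab_group_add) bistr \<Rightarrow> ('k, 'y::ab_group_add) bistr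
    \<Rightarrow> ('k, 'z::ab_group_add) bistr \<Rightarrow> ('x \<Rightarrow> 'y \<Rightarrow> 'z) \<Rightarrow> bool" where
  "coalg_map2 X Y Z F \<longleftrightarrow> bilin (scl X) (scl Y) (scl Z) F
    \<and> (\<forall>x y. teq2 (scl Z) (scl Z) (cop Z (F x y))
              [(F x1 y1, F x2 y2). (x1, x2) \<leftarrow> cop X x, (y1, y2) \<leftarrow> cop Y y])
    \<and> (\<forall>x y. cou Z (F x y) = cou X x * cou Y y)"

text \<open>ra = right action (H (x) A \<rightarrow> H), la = left action (H (x) A \<rightarrow> A), f : H (x) H \<rightarrow> A.\<close>
definition ext_datum :: "('k::field, 'a::ab_group_add) bistr \<Rightarrow> ('k, 'h::ab_group_add) bistr
    \<Rightarrow> ('h \<Rightarrow> 'a \<Rightarrow> 'h) \<Rightarrow> ('h \<Rightarrow> 'a \<Rightarrow> 'a) \<Rightarrow> ('h \<Rightarrow> 'h \<Rightarrow> 'a) \<Rightarrow> bool" where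
  "ext_datum A H ra la f \<longleftrightarrow> coalg H
    \<and> bilin (scl H) (scl H) (scl H) (mul H)
    \<and> (\<forall>h. mul H (one H) h = h \<and> mul H h (one H) = h)
    \<and> teq2 (scl H) (scl H) (cop H (one H)) [(one H, one H)]
    \<and> coalg_map2 H A H ra \<and> coalg_map2 H A A la \<and> coalg_map2 H H A f
    \<and> (\<forall>h. la h (one A) = scl A (cou H h) (one A))
    \<and> (\<forall>a. la (one H) a = a)
    \<and> (\<forall>a. ra (one H) a = scl H (cou A a) (one H))
    \<and> (\<forall>h. ra h (one A) = h)
    \<and> (\<forall>h. f h (one H) = scl A (cou H h) (one A) \<and> f (one H) h = scl A (cou H h) (one A))"

text \<open>The multiplication of A \<ltimes> H on simple tensors a \<ltimes> h, c \<ltimes> g: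
  a (h(1) \<triangleright> c(1)) f(h(2) \<triangleleft> c(2), g(1)) \<ltimes> (h(3) \<triangleleft> c(3)) g(2).\<close>
definition smash :: "('k, 'a) bistr \<Rightarrow> ('k, 'h) bistr
    \<Rightarrow> ('h \<Rightarrow> 'a \<Rightarrow> 'h) \<Rightarrow> ('h \<Rightarrow> 'a \<Rightarrow> 'a) \<Rightarrow> ('h \<Rightarrow> 'h \<Rightarrow> 'a)
    \<Rightarrow> ('a \<times> 'h) \<Rightarrow> ('a \<times> 'h) \<Rightarrow> ('a \<times> 'h) list" where
  "smash A H ra la f p q = (case p of (a, h) \<Rightarrow> case q of (c, g) \<Rightarrow>
     [(mul A (mul A a (la h1 c1)) (f (ra h2 c2) g1), mul H (ra h3 c3) g2).
        (h1, h2, h3) \<leftarrow> cop3 H h, (c1, c2, c3) \<leftarrow> cop3 A c, (g1, g2) \<leftarrow> cop H g])"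

definition smul :: "('k, 'a) bistr \<Rightarrow> ('k, 'h) bistr
    \<Rightarrow> ('h \<Rightarrow> 'a \<Rightarrow> 'h) \<Rightarrow> ('h \<Rightarrow> 'a \<Rightarrow> 'a) \<Rightarrow> ('h \<Rightarrow> 'h \<Rightarrow> 'a)
    \<Rightarrow> ('a \<times> 'h) list \<Rightarrow> ('a \<times> 'h) list \<Rightarrow> ('a \<times> 'h) list" where
  "smul A H ra la f xs ys = [r. p \<leftarrow> xs, q \<leftarrow> ys, r \<leftarrow> smash A H ra la f p q]"

text \<open>Tensor product coalgebra structure of A (x) H; an element of (A (x) H) (x) (A (x) H)
  is represented by 4-tuples (a1, h1, a2, h2) meaning (a1 \<ltimes> h1) (x) (a2 \<ltimes> h2).\<close>
definition copT :: "('k, 'a) bistr \<Rightarrow> ('k, 'h) bistr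
    \<Rightarrow> ('a \<times> 'h) list \<Rightarrow> ('a \<times> 'h \<times> 'a \<times> 'h) list" where
  "copT A H xs = [(a1, h1, a2, h2). (a, h) \<leftarrow> xs, (a1, a2) \<leftarrow> cop A a, (h1, h2) \<leftarrow> cop H h]"

definition couT :: "('k::field, 'a) bistr \<Rightarrow> ('k, 'h) bistr \<Rightarrow> ('a \<times> 'h) list \<Rightarrow> 'k" where
  "couT A H xs = sum_list [cou A a * cou H h. (a, h) \<leftarrow> xs]"

definition prodT :: "('k, 'a) bistr \<Rightarrow> ('k, 'h) bistr
    \<Rightarrow> ('h \<Rightarrow> 'a \<Rightarrow> 'h) \<Rightarrow> ('h \<Rightarrow> 'a \<Rightarrow> 'a) \<Rightarrow> ('h \<Rightarrow> 'h \<Rightarrow> 'a)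
    \<Rightarrow> ('a \<times> 'h \<times> 'a \<times> 'h) list \<Rightarrow> ('a \<times> 'h \<times> 'a \<times> 'h) list \<Rightarrow> ('a \<times> 'h \<times> 'a \<times> 'h) list" where
  "prodT A H ra la f ps qs = [(a, h, b, l). (a1, h1, a2, h2) \<leftarrow> ps, (b1, l1, b2, l2) \<leftarrow> qs,
       (a, h) \<leftarrow> smash A H ra la f (a1, h1) (b1, l1), (b, l) \<leftarrow> smash A H ra la f (a2, h2) (b2, l2)]"

text \<open>\<Omega>(A) is a bialgebra extending structure: A \<ltimes> H (with unit 1 \<ltimes> 1 and the tensor
  product coalgebra structure) is a bialgebra.  Elements of A \<ltimes> H are arbitrary
  representatives (finite sums of simple tensors); equalities are in the tensor products.\<close>
definition bialg_ext :: "('k::field, 'a::ab_group_add) bistr \<Rightarrow> ('k, 'h::ab_group_add) bistr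
    \<Rightarrow> ('h \<Rightarrow> 'a \<Rightarrow> 'h) \<Rightarrow> ('h \<Rightarrow> 'a \<Rightarrow> 'a) \<Rightarrow> ('h \<Rightarrow> 'h \<Rightarrow> 'a) \<Rightarrow> bool" where
  "bialg_ext A H ra la f \<longleftrightarrow>
    (let sA = scl A; sH = scl H; m = smul A H ra la f; u = [(one A, one H)] in
      (\<forall>xs ys zs. teq2 sA sH (m (m xs ys) zs) (m xs (m ys zs)))
    \<and> (\<forall>xs. teq2 sA sH (m u xs) xs \<and> teq2 sA sH (m xs u) xs)
    \<and> (\<forall>xs. teq6 sA sH sA sH sA sH
          [(a11, h11, a12, h12, a2, h2). (a1, h1, a2, h2) \<leftarrow> copT A H xs,
               (a11, h11, a12, h12) \<leftarrow> copT A H [(a1, h1)]]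
          [(a1, h1, a21, h21, a22, h22). (a1, h1, a2, h2) \<leftarrow> copT A H xs,
               (a21, h21, a22, h22) \<leftarrow> copT A H [(a2, h2)]])
    \<and> (\<forall>xs. teq2 sA sH [(sA (cou A a1 * cou H h1) a2, h2). (a1, h1, a2, h2) \<leftarrow> copT A H xs] xs)
    \<and> (\<forall>xs. teq2 sA sH [(sA (cou A a2 * cou H h2) a1, h1). (a1, h1, a2, h2) \<leftarrow> copT A H xs] xs)
    \<and> (\<forall>xs ys. teq4 sA sH sA sH (copT A H (m xs ys)) (prodT A H ra la f (copT A H xs) (copT A H ys)))
    \<and> teq4 sA sH sA sH (copT A H u) [(one A, one H, one A, one H)]
    \<and> (\<forall>xs ys. couT A H (m xs ys) = couT A H xs * couT A H ys)
    \<and> couT A H u = 1)"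

end

theory Submission
  imports Defs
begin


lemma sl_concat: "sum_list (concat xss) = sum_list (map sum_list xss)"
  by (induct xss) auto

lemma sl_plus: "sum_list (map (\<lambda>(u,v). F u v + G u v) L) = (
   sum_list (map (\<lambda>(u,v). F u v) L) + sum_list (map (\<lambda>(u,v). G u v) L) :: 'a::comm_monoid_add)"
  by (induct L) (auto simp: algebra_simps)

lemma sl_zero: "sum_list (map (\<lambda>(u,v). 0) L) = (0::'a::monoid_add)"
  by (induct L) auto

lemma sl_cmult: "(c::'a::semiring_0) * sum_list (map (\<lambda>(u,v). F u v) L) = sum_list (map (\<lambda>(u,v). c * F u v) L)"
  by (induct L) (auto simp: algebra_simps)

lemma sl_multc: "sum_list (map (\<lambda>(u,v). F u v) L) * (c::'a::semiring_0) = sum_list (map (\<lambda>(u,v). F u v * c) L)"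
  by (induct L) (auto simp: algebra_simps)

definition bil :: "('k::field \<Rightarrow> 'a::ab_group_add \<Rightarrow> 'a) \<Rightarrow> ('k \<Rightarrow> 'b::ab_group_add \<Rightarrow> 'b)
    \<Rightarrow> ('a \<Rightarrow> 'b \<Rightarrow> 'k) \<Rightarrow> bool" where
  "bil s1 s2 \<Phi> \<longleftrightarrow> (\<forall>x x' y. \<Phi> (x + x') y = \<Phi> x y + \<Phi> x' y)
     \<and> (\<forall>x y y'. \<Phi> x (y + y') = \<Phi> x y + \<Phi> x y')
     \<and> (\<forall>c x y. \<Phi> (s1 c x) y = c * \<Phi> x y)
     \<and> (\<forall>c x y. \<Phi> x (s2 c y) = c * \<Phi> x y)"

definition tril :: "('k::field \<Rightarrow> 'a::ab_group_add \<Rightarrow> 'a) \<Rightarrow> ('k \<Rightarrow> 'b::ab_group_add \<Rightarrow> 'b)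
    \<Rightarrow> ('k \<Rightarrow> 'c::ab_group_add \<Rightarrow> 'c) \<Rightarrow> ('a \<Rightarrow> 'b \<Rightarrow> 'c \<Rightarrow> 'k) \<Rightarrow> bool" where
  "tril s1 s2 s3 \<Phi> \<longleftrightarrow> (\<forall>x x' y z. \<Phi> (x + x') y z = \<Phi> x y z + \<Phi> x' y z)
     \<and> (\<forall>x y y' z. \<Phi> x (y + y') z = \<Phi> x y z + \<Phi> x y' z)
     \<and> (\<forall>x y z z'. \<Phi> x y (z + z') = \<Phi> x y z + \<Phi> x y z')
     \<and> (\<forall>c x y z. \<Phi> (s1 c x) y z = c * \<Phi> x y z)
     \<and> (\<forall>c x y z. \<Phi> x (s2 c y) z = c * \<Phi> x y z)
     \<and> (\<forall>c x y z. \<Phi> x y (s3 c z) = c * \<Phi> x y z)"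

definition lin :: "('k::field \<Rightarrow> 'a::ab_group_add \<Rightarrow> 'a) \<Rightarrow> ('a \<Rightarrow> 'k) \<Rightarrow> bool" where
  "lin s G \<longleftrightarrow> (\<forall>x x'. G (x + x') = G x + G x') \<and> (\<forall>c x. G (s c x) = c * G x)"

lemma vs_field: "vector_space ((*) :: 'k::field \<Rightarrow> 'k \<Rightarrow> 'k)"
  by unfold_locales (auto simp: algebra_simps)

lemma lin_form_iff: "vector_space s \<Longrightarrow> lin_form s G \<longleftrightarrow> lin s G"
  unfolding lin_form_def lin_def linear_iff using vs_field by auto

lemma form2_iff: "vector_space s1 \<Longrightarrow> vector_space s2 \<Longrightarrow> form2 s1 s2 \<Phi> \<longleftrightarrow> bil s1 s2 \<Phi>"
  unfolding form2_def bil_def by (auto simp: lin_form_iff lin_def)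

lemma form3_iff: "vector_space s1 \<Longrightarrow> vector_space s2 \<Longrightarrow> vector_space s3 \<Longrightarrow>
   form3 s1 s2 s3 \<Phi> \<longleftrightarrow> tril s1 s2 s3 \<Phi>"
  unfolding form3_def tril_def by (auto simp: lin_form_iff lin_def)

lemma teq2_use: "teq2 s1 s2 xs ys \<Longrightarrow> vector_space s1 \<Longrightarrow> vector_space s2 \<Longrightarrow> bil s1 s2 \<Phi> \<Longrightarrow>
   sum_list (map (\<lambda>(u,v). \<Phi> u v) xs) = sum_list (map (\<lambda>(u,v). \<Phi> u v) ys)"
  unfolding teq2_def by (simp add: form2_iff)

lemma teq3_use: "teq3 s1 s2 s3 xs ys \<Longrightarrow> vector_space s1 \<Longrightarrow> vector_space s2 \<Longrightarrow> vector_space s3 \<Longrightarrow>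
   tril s1 s2 s3 \<Phi> \<Longrightarrow>
   sum_list (map (\<lambda>(u,v,w). \<Phi> u v w) xs) = sum_list (map (\<lambda>(u,v,w). \<Phi> u v w) ys)"
  unfolding teq3_def by (simp add: form3_iff)

lemma lin_sum_list: "lin s G \<Longrightarrow> G (sum_list xs) = sum_list (map G xs)"
proof (induct xs)
  case Nil
  have "G (0 + 0) = G 0 + G 0" using Nil unfolding lin_def by blast
  then have "G 0 = G 0 + G 0" by (simp only: add_0)
  then show ?case by (simp only: add_cancel_right_right sum_list.Nil list.map)
next
  case (Cons a xs) then show ?case unfolding lin_def by simp
qed

lemma sl_cong: "(\<And>u v. F u v = G u v) \<Longrightarrow> sum_list (map (\<lambda>(u,v). F u v) L) = sum_list (map (\<lambda>(u,v). G u v) L)"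
  by simp

lemma sl_swap: "sum_list (map (\<lambda>(x,y). sum_list (map (\<lambda>(p,q). G x y p q) N)) M) = (
  sum_list (map (\<lambda>(p,q). sum_list (map (\<lambda>(x,y). G x y p q) M)) N) :: 'z::comm_monoid_add)"
proof (induct M)
  case Nil then show ?case by (simp add: sl_zero)
next
  case (Cons a M) then show ?case by (cases a) (simp add: sl_plus)
qed

lemma block1: "sum_list (map (\<lambda>(x1,y1). sum_list (map (\<lambda>(p,q). G x1 y1 p q) (L))) (K1)) =
  (sum_list (map (\<lambda>(p,q). sum_list (map (\<lambda>(x1,y1). G x1 y1 p q) (K1))) (L)) :: 'z::comm_monoid_add)"
  by (rule sl_swap)

lemma block2: "sum_list (map (\<lambda>(x1,y1). sum_list (map (\<lambda>(x2,y2). sum_list (map (\<lambda>(p,q). G x1 y1 x2 y2 p q) (L))) (K2 x1 y1))) (K1)) =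
  (sum_list (map (\<lambda>(p,q). sum_list (map (\<lambda>(x1,y1). sum_list (map (\<lambda>(x2,y2). G x1 y1 x2 y2 p q) (K2 x1 y1))) (K1))) (L)) :: 'z::comm_monoid_add)"
  by (simp only: sl_swap[where N=L])

lemma block3: "sum_list (map (\<lambda>(x1,y1). sum_list (map (\<lambda>(x2,y2). sum_list (map (\<lambda>(x3,y3). sum_list (map (\<lambda>(p,q). G x1 y1 x2 y2 x3 y3 p q) (L))) (K3 x1 y1 x2 y2))) (K2 x1 y1))) (K1)) =
  (sum_list (map (\<lambda>(p,q). sum_list (map (\<lambda>(x1,y1). sum_list (map (\<lambda>(x2,y2). sum_list (map (\<lambda>(x3,y3). G x1 y1 x2 y2 x3 y3 p q) (K3 x1 y1 x2 y2))) (K2 x1 y1))) (K1))) (L)) :: 'z::comm_monoid_add)"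
  by (simp only: sl_swap[where N=L])

lemma block4: "sum_list (map (\<lambda>(x1,y1). sum_list (map (\<lambda>(x2,y2). sum_list (map (\<lambda>(x3,y3). sum_list (map (\<lambda>(x4,y4). sum_list (map (\<lambda>(p,q). G x1 y1 x2 y2 x3 y3 x4 y4 p q) (L))) (K4 x1 y1 x2 y2 x3 y3))) (K3 x1 y1 x2 y2))) (K2 x1 y1))) (K1)) =
  (sum_list (map (\<lambda>(p,q). sum_list (map (\<lambda>(x1,y1). sum_list (map (\<lambda>(x2,y2). sum_list (map (\<lambda>(x3,y3). sum_list (map (\<lambda>(x4,y4). G x1 y1 x2 y2 x3 y3 x4 y4 p q) (K4 x1 y1 x2 y2 x3 y3))) (K3 x1 y1 x2 y2))) (K2 x1 y1))) (K1))) (L)) :: 'z::comm_monoid_add)"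
  by (simp only: sl_swap[where N=L])

lemma block5: "sum_list (map (\<lambda>(x1,y1). sum_list (map (\<lambda>(x2,y2). sum_list (map (\<lambda>(x3,y3). sum_list (map (\<lambda>(x4,y4). sum_list (map (\<lambda>(x5,y5). sum_list (map (\<lambda>(p,q). G x1 y1 x2 y2 x3 y3 x4 y4 x5 y5 p q) (L))) (K5 x1 y1 x2 y2 x3 y3 x4 y4))) (K4 x1 y1 x2 y2 x3 y3))) (K3 x1 y1 x2 y2))) (K2 x1 y1))) (K1)) =
  (sum_list (map (\<lambda>(p,q). sum_list (map (\<lambda>(x1,y1). sum_list (map (\<lambda>(x2,y2). sum_list (map (\<lambda>(x3,y3). sum_list (map (\<lambda>(x4,y4). sum_list (map (\<lambda>(x5,y5). G x1 y1 x2 y2 x3 y3 x4 y4 x5 y5 p q) (K5 x1 y1 x2 y2 x3 y3 x4 y4))) (K4 x1 y1 x2 y2 x3 y3))) (K3 x1 y1 x2 y2))) (K2 x1 y1))) (K1))) (L)) :: 'z::comm_monoid_add)"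
  by (simp only: sl_swap[where N=L])

lemma block6: "sum_list (map (\<lambda>(x1,y1). sum_list (map (\<lambda>(x2,y2). sum_list (map (\<lambda>(x3,y3). sum_list (map (\<lambda>(x4,y4). sum_list (map (\<lambda>(x5,y5). sum_list (map (\<lambda>(x6,y6). sum_list (map (\<lambda>(p,q). G x1 y1 x2 y2 x3 y3 x4 y4 x5 y5 x6 y6 p q) (L))) (K6 x1 y1 x2 y2 x3 y3 x4 y4 x5 y5))) (K5 x1 y1 x2 y2 x3 y3 x4 y4))) (K4 x1 y1 x2 y2 x3 y3))) (K3 x1 y1 x2 y2))) (K2 x1 y1))) (K1)) =
  (sum_list (map (\<lambda>(p,q). sum_list (map (\<lambda>(x1,y1). sum_list (map (\<lambda>(x2,y2). sum_list (map (\<lambda>(x3,y3). sum_list (map (\<lambda>(x4,y4). sum_list (map (\<lambda>(x5,y5). sum_list (map (\<lambda>(x6,y6). G x1 y1 x2 y2 x3 y3 x4 y4 x5 y5 x6 y6 p q) (K6 x1 y1 x2 y2 x3 y3 x4 y4 x5 y5))) (K5 x1 y1 x2 y2 x3 y3 x4 y4))) (K4 x1 y1 x2 y2 x3 y3))) (K3 x1 y1 x2 y2))) (K2 x1 y1))) (K1))) (L)) :: 'z::comm_monoid_add)"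
  by (simp only: sl_swap[where N=L])

lemma block7: "sum_list (map (\<lambda>(x1,y1). sum_list (map (\<lambda>(x2,y2). sum_list (map (\<lambda>(x3,y3). sum_list (map (\<lambda>(x4,y4). sum_list (map (\<lambda>(x5,y5). sum_list (map (\<lambda>(x6,y6). sum_list (map (\<lambda>(x7,y7). sum_list (map (\<lambda>(p,q). G x1 y1 x2 y2 x3 y3 x4 y4 x5 y5 x6 y6 x7 y7 p q) (L))) (K7 x1 y1 x2 y2 x3 y3 x4 y4 x5 y5 x6 y6))) (K6 x1 y1 x2 y2 x3 y3 x4 y4 x5 y5))) (K5 x1 y1 x2 y2 x3 y3 x4 y4))) (K4 x1 y1 x2 y2 x3 y3))) (K3 x1 y1 x2 y2))) (K2 x1 y1))) (K1)) =
  (sum_list (map (\<lambda>(p,q). sum_list (map (\<lambda>(x1,y1). sum_list (map (\<lambda>(x2,y2). sum_list (map (\<lambda>(x3,y3). sum_list (map (\<lambda>(x4,y4). sum_list (map (\<lambda>(x5,y5). sum_list (map (\<lambda>(x6,y6). sum_list (map (\<lambda>(x7,y7). G x1 y1 x2 y2 x3 y3 x4 y4 x5 y5 x6 y6 x7 y7 p q) (K7 x1 y1 x2 y2 x3 y3 x4 y4 x5 y5 x6 y6))) (K6 x1 y1 x2 y2 x3 y3 x4 y4 x5 y5))) (K5 x1 y1 x2 y2 x3 y3 x4 y4))) (K4 x1 y1 x2 y2 x3 y3))) (K3 x1 y1 x2 y2))) (K2 x1 y1))) (K1))) (L)) :: 'z::comm_monoid_add)"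
  by (simp only: sl_swap[where N=L])

lemma hoistu1: "sum_list (map (\<lambda>(u,v). sum_list (map (\<lambda>(x1,y1). sum_list (map (\<lambda>(p,q). F u v x1 y1 p q) (cop C u))) (K1 v))) (L0)) =
  (sum_list (map (\<lambda>(u,v). sum_list (map (\<lambda>(p,q). sum_list (map (\<lambda>(x1,y1). F u v x1 y1 p q) (K1 v))) (cop C u))) (L0)) :: 'z::comm_monoid_add)"
  by (rule sl_cong, rule block1)

lemma hoistv1: "sum_list (map (\<lambda>(u,v). sum_list (map (\<lambda>(x1,y1). sum_list (map (\<lambda>(p,q). F u v x1 y1 p q) (cop C v))) (K1))) (L0)) =
  (sum_list (map (\<lambda>(u,v). sum_list (map (\<lambda>(p,q). sum_list (map (\<lambda>(x1,y1). F u v x1 y1 p q) (K1))) (cop C v))) (L0)) :: 'z::comm_monoid_add)"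
  by (rule sl_cong, rule block1)

lemma hoistu2: "sum_list (map (\<lambda>(u,v). sum_list (map (\<lambda>(x1,y1). sum_list (map (\<lambda>(x2,y2). sum_list (map (\<lambda>(p,q). F u v x1 y1 x2 y2 p q) (cop C u))) (K2 v x1 y1))) (K1 v))) (L0)) =
  (sum_list (map (\<lambda>(u,v). sum_list (map (\<lambda>(p,q). sum_list (map (\<lambda>(x1,y1). sum_list (map (\<lambda>(x2,y2). F u v x1 y1 x2 y2 p q) (K2 v x1 y1))) (K1 v))) (cop C u))) (L0)) :: 'z::comm_monoid_add)"
  by (rule sl_cong, rule block2)

lemma hoistv2: "sum_list (map (\<lambda>(u,v). sum_list (map (\<lambda>(x1,y1). sum_list (map (\<lambda>(x2,y2). sum_list (map (\<lambda>(p,q). F u v x1 y1 x2 y2 p q) (cop C v))) (K2 x1 y1))) (K1))) (L0)) =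
  (sum_list (map (\<lambda>(u,v). sum_list (map (\<lambda>(p,q). sum_list (map (\<lambda>(x1,y1). sum_list (map (\<lambda>(x2,y2). F u v x1 y1 x2 y2 p q) (K2 x1 y1))) (K1))) (cop C v))) (L0)) :: 'z::comm_monoid_add)"
  by (rule sl_cong, rule block2)

lemma hoistu3: "sum_list (map (\<lambda>(u,v). sum_list (map (\<lambda>(x1,y1). sum_list (map (\<lambda>(x2,y2). sum_list (map (\<lambda>(x3,y3). sum_list (map (\<lambda>(p,q). F u v x1 y1 x2 y2 x3 y3 p q) (cop C u))) (K3 v x1 y1 x2 y2))) (K2 v x1 y1))) (K1 v))) (L0)) =
  (sum_list (map (\<lambda>(u,v). sum_list (map (\<lambda>(p,q). sum_list (map (\<lambda>(x1,y1). sum_list (map (\<lambda>(x2,y2). sum_list (map (\<lambda>(x3,y3). F u v x1 y1 x2 y2 x3 y3 p q) (K3 v x1 y1 x2 y2))) (K2 v x1 y1))) (K1 v))) (cop C u))) (L0)) :: 'z::comm_monoid_add)"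
  by (rule sl_cong, rule block3)

lemma hoistv3: "sum_list (map (\<lambda>(u,v). sum_list (map (\<lambda>(x1,y1). sum_list (map (\<lambda>(x2,y2). sum_list (map (\<lambda>(x3,y3). sum_list (map (\<lambda>(p,q). F u v x1 y1 x2 y2 x3 y3 p q) (cop C v))) (K3 x1 y1 x2 y2))) (K2 x1 y1))) (K1))) (L0)) =
  (sum_list (map (\<lambda>(u,v). sum_list (map (\<lambda>(p,q). sum_list (map (\<lambda>(x1,y1). sum_list (map (\<lambda>(x2,y2). sum_list (map (\<lambda>(x3,y3). F u v x1 y1 x2 y2 x3 y3 p q) (K3 x1 y1 x2 y2))) (K2 x1 y1))) (K1))) (cop C v))) (L0)) :: 'z::comm_monoid_add)"
  by (rule sl_cong, rule block3)

lemma hoistu4: "sum_list (map (\<lambda>(u,v). sum_list (map (\<lambda>(x1,y1). sum_list (map (\<lambda>(x2,y2). sum_list (map (\<lambda>(x3,y3). sum_list (map (\<lambda>(x4,y4). sum_list (map (\<lambda>(p,q). F u v x1 y1 x2 y2 x3 y3 x4 y4 p q) (cop C u))) (K4 v x1 y1 x2 y2 x3 y3))) (K3 v x1 y1 x2 y2))) (K2 v x1 y1))) (K1 v))) (L0)) =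
  (sum_list (map (\<lambda>(u,v). sum_list (map (\<lambda>(p,q). sum_list (map (\<lambda>(x1,y1). sum_list (map (\<lambda>(x2,y2). sum_list (map (\<lambda>(x3,y3). sum_list (map (\<lambda>(x4,y4). F u v x1 y1 x2 y2 x3 y3 x4 y4 p q) (K4 v x1 y1 x2 y2 x3 y3))) (K3 v x1 y1 x2 y2))) (K2 v x1 y1))) (K1 v))) (cop C u))) (L0)) :: 'z::comm_monoid_add)"
  by (rule sl_cong, rule block4)

lemma hoistv4: "sum_list (map (\<lambda>(u,v). sum_list (map (\<lambda>(x1,y1). sum_list (map (\<lambda>(x2,y2). sum_list (map (\<lambda>(x3,y3). sum_list (map (\<lambda>(x4,y4). sum_list (map (\<lambda>(p,q). F u v x1 y1 x2 y2 x3 y3 x4 y4 p q) (cop C v))) (K4 x1 y1 x2 y2 x3 y3))) (K3 x1 y1 x2 y2))) (K2 x1 y1))) (K1))) (L0)) =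
  (sum_list (map (\<lambda>(u,v). sum_list (map (\<lambda>(p,q). sum_list (map (\<lambda>(x1,y1). sum_list (map (\<lambda>(x2,y2). sum_list (map (\<lambda>(x3,y3). sum_list (map (\<lambda>(x4,y4). F u v x1 y1 x2 y2 x3 y3 x4 y4 p q) (K4 x1 y1 x2 y2 x3 y3))) (K3 x1 y1 x2 y2))) (K2 x1 y1))) (K1))) (cop C v))) (L0)) :: 'z::comm_monoid_add)"
  by (rule sl_cong, rule block4)

lemma hoistu5: "sum_list (map (\<lambda>(u,v). sum_list (map (\<lambda>(x1,y1). sum_list (map (\<lambda>(x2,y2). sum_list (map (\<lambda>(x3,y3). sum_list (map (\<lambda>(x4,y4). sum_list (map (\<lambda>(x5,y5). sum_list (map (\<lambda>(p,q). F u v x1 y1 x2 y2 x3 y3 x4 y4 x5 y5 p q) (cop C u))) (K5 v x1 y1 x2 y2 x3 y3 x4 y4))) (K4 v x1 y1 x2 y2 x3 y3))) (K3 v x1 y1 x2 y2))) (K2 v x1 y1))) (K1 v))) (L0)) =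
  (sum_list (map (\<lambda>(u,v). sum_list (map (\<lambda>(p,q). sum_list (map (\<lambda>(x1,y1). sum_list (map (\<lambda>(x2,y2). sum_list (map (\<lambda>(x3,y3). sum_list (map (\<lambda>(x4,y4). sum_list (map (\<lambda>(x5,y5). F u v x1 y1 x2 y2 x3 y3 x4 y4 x5 y5 p q) (K5 v x1 y1 x2 y2 x3 y3 x4 y4))) (K4 v x1 y1 x2 y2 x3 y3))) (K3 v x1 y1 x2 y2))) (K2 v x1 y1))) (K1 v))) (cop C u))) (L0)) :: 'z::comm_monoid_add)"
  by (rule sl_cong, rule block5)

lemma hoistv5: "sum_list (map (\<lambda>(u,v). sum_list (map (\<lambda>(x1,y1). sum_list (map (\<lambda>(x2,y2). sum_list (map (\<lambda>(x3,y3). sum_list (map (\<lambda>(x4,y4). sum_list (map (\<lambda>(x5,y5). sum_list (map (\<lambda>(p,q). F u v x1 y1 x2 y2 x3 y3 x4 y4 x5 y5 p q) (cop C v))) (K5 x1 y1 x2 y2 x3 y3 x4 y4))) (K4 x1 y1 x2 y2 x3 y3))) (K3 x1 y1 x2 y2))) (K2 x1 y1))) (K1))) (L0)) =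
  (sum_list (map (\<lambda>(u,v). sum_list (map (\<lambda>(p,q). sum_list (map (\<lambda>(x1,y1). sum_list (map (\<lambda>(x2,y2). sum_list (map (\<lambda>(x3,y3). sum_list (map (\<lambda>(x4,y4). sum_list (map (\<lambda>(x5,y5). F u v x1 y1 x2 y2 x3 y3 x4 y4 x5 y5 p q) (K5 x1 y1 x2 y2 x3 y3 x4 y4))) (K4 x1 y1 x2 y2 x3 y3))) (K3 x1 y1 x2 y2))) (K2 x1 y1))) (K1))) (cop C v))) (L0)) :: 'z::comm_monoid_add)"
  by (rule sl_cong, rule block5)

lemma hoistu6: "sum_list (map (\<lambda>(u,v). sum_list (map (\<lambda>(x1,y1). sum_list (map (\<lambda>(x2,y2). sum_list (map (\<lambda>(x3,y3). sum_list (map (\<lambda>(x4,y4). sum_list (map (\<lambda>(x5,y5). sum_list (map (\<lambda>(x6,y6). sum_list (map (\<lambda>(p,q). F u v x1 y1 x2 y2 x3 y3 x4 y4 x5 y5 x6 y6 p q) (cop C u))) (K6 v x1 y1 x2 y2 x3 y3 x4 y4 x5 y5))) (K5 v x1 y1 x2 y2 x3 y3 x4 y4))) (K4 v x1 y1 x2 y2 x3 y3))) (K3 v x1 y1 x2 y2))) (K2 v x1 y1))) (K1 v))) (L0)) =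
  (sum_list (map (\<lambda>(u,v). sum_list (map (\<lambda>(p,q). sum_list (map (\<lambda>(x1,y1). sum_list (map (\<lambda>(x2,y2). sum_list (map (\<lambda>(x3,y3). sum_list (map (\<lambda>(x4,y4). sum_list (map (\<lambda>(x5,y5). sum_list (map (\<lambda>(x6,y6). F u v x1 y1 x2 y2 x3 y3 x4 y4 x5 y5 x6 y6 p q) (K6 v x1 y1 x2 y2 x3 y3 x4 y4 x5 y5))) (K5 v x1 y1 x2 y2 x3 y3 x4 y4))) (K4 v x1 y1 x2 y2 x3 y3))) (K3 v x1 y1 x2 y2))) (K2 v x1 y1))) (K1 v))) (cop C u))) (L0)) :: 'z::comm_monoid_add)"
  by (rule sl_cong, rule block6)

lemma hoistv6: "sum_list (map (\<lambda>(u,v). sum_list (map (\<lambda>(x1,y1). sum_list (map (\<lambda>(x2,y2). sum_list (map (\<lambda>(x3,y3). sum_list (map (\<lambda>(x4,y4). sum_list (map (\<lambda>(x5,y5). sum_list (map (\<lambda>(x6,y6). sum_list (map (\<lambda>(p,q). F u v x1 y1 x2 y2 x3 y3 x4 y4 x5 y5 x6 y6 p q) (cop C v))) (K6 x1 y1 x2 y2 x3 y3 x4 y4 x5 y5))) (K5 x1 y1 x2 y2 x3 y3 x4 y4))) (K4 x1 y1 x2 y2 x3 y3))) (K3 x1 y1 x2 y2))) (K2 x1 y1))) (K1))) (L0)) =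
  (sum_list (map (\<lambda>(u,v). sum_list (map (\<lambda>(p,q). sum_list (map (\<lambda>(x1,y1). sum_list (map (\<lambda>(x2,y2). sum_list (map (\<lambda>(x3,y3). sum_list (map (\<lambda>(x4,y4). sum_list (map (\<lambda>(x5,y5). sum_list (map (\<lambda>(x6,y6). F u v x1 y1 x2 y2 x3 y3 x4 y4 x5 y5 x6 y6 p q) (K6 x1 y1 x2 y2 x3 y3 x4 y4 x5 y5))) (K5 x1 y1 x2 y2 x3 y3 x4 y4))) (K4 x1 y1 x2 y2 x3 y3))) (K3 x1 y1 x2 y2))) (K2 x1 y1))) (K1))) (cop C v))) (L0)) :: 'z::comm_monoid_add)"
  by (rule sl_cong, rule block6)

lemma hoistu7: "sum_list (map (\<lambda>(u,v). sum_list (map (\<lambda>(x1,y1). sum_list (map (\<lambda>(x2,y2). sum_list (map (\<lambda>(x3,y3). sum_list (map (\<lambda>(x4,y4). sum_list (map (\<lambda>(x5,y5). sum_list (map (\<lambda>(x6,y6). sum_list (map (\<lambda>(x7,y7). sum_list (map (\<lambda>(p,q). F u v x1 y1 x2 y2 x3 y3 x4 y4 x5 y5 x6 y6 x7 y7 p q) (cop C u))) (K7 v x1 y1 x2 y2 x3 y3 x4 y4 x5 y5 x6 y6))) (K6 v x1 y1 x2 y2 x3 y3 x4 y4 x5 y5))) (K5 v x1 y1 x2 y2 x3 y3 x4 y4))) (K4 v x1 y1 x2 y2 x3 y3))) (K3 v x1 y1 x2 y2))) (K2 v x1 y1))) (K1 v))) (L0)) =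
  (sum_list (map (\<lambda>(u,v). sum_list (map (\<lambda>(p,q). sum_list (map (\<lambda>(x1,y1). sum_list (map (\<lambda>(x2,y2). sum_list (map (\<lambda>(x3,y3). sum_list (map (\<lambda>(x4,y4). sum_list (map (\<lambda>(x5,y5). sum_list (map (\<lambda>(x6,y6). sum_list (map (\<lambda>(x7,y7). F u v x1 y1 x2 y2 x3 y3 x4 y4 x5 y5 x6 y6 x7 y7 p q) (K7 v x1 y1 x2 y2 x3 y3 x4 y4 x5 y5 x6 y6))) (K6 v x1 y1 x2 y2 x3 y3 x4 y4 x5 y5))) (K5 v x1 y1 x2 y2 x3 y3 x4 y4))) (K4 v x1 y1 x2 y2 x3 y3))) (K3 v x1 y1 x2 y2))) (K2 v x1 y1))) (K1 v))) (cop C u))) (L0)) :: 'z::comm_monoid_add)"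
  by (rule sl_cong, rule block7)

lemma hoistv7: "sum_list (map (\<lambda>(u,v). sum_list (map (\<lambda>(x1,y1). sum_list (map (\<lambda>(x2,y2). sum_list (map (\<lambda>(x3,y3). sum_list (map (\<lambda>(x4,y4). sum_list (map (\<lambda>(x5,y5). sum_list (map (\<lambda>(x6,y6). sum_list (map (\<lambda>(x7,y7). sum_list (map (\<lambda>(p,q). F u v x1 y1 x2 y2 x3 y3 x4 y4 x5 y5 x6 y6 x7 y7 p q) (cop C v))) (K7 x1 y1 x2 y2 x3 y3 x4 y4 x5 y5 x6 y6))) (K6 x1 y1 x2 y2 x3 y3 x4 y4 x5 y5))) (K5 x1 y1 x2 y2 x3 y3 x4 y4))) (K4 x1 y1 x2 y2 x3 y3))) (K3 x1 y1 x2 y2))) (K2 x1 y1))) (K1))) (L0)) =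
  (sum_list (map (\<lambda>(u,v). sum_list (map (\<lambda>(p,q). sum_list (map (\<lambda>(x1,y1). sum_list (map (\<lambda>(x2,y2). sum_list (map (\<lambda>(x3,y3). sum_list (map (\<lambda>(x4,y4). sum_list (map (\<lambda>(x5,y5). sum_list (map (\<lambda>(x6,y6). sum_list (map (\<lambda>(x7,y7). F u v x1 y1 x2 y2 x3 y3 x4 y4 x5 y5 x6 y6 x7 y7 p q) (K7 x1 y1 x2 y2 x3 y3 x4 y4 x5 y5 x6 y6))) (K6 x1 y1 x2 y2 x3 y3 x4 y4 x5 y5))) (K5 x1 y1 x2 y2 x3 y3 x4 y4))) (K4 x1 y1 x2 y2 x3 y3))) (K3 x1 y1 x2 y2))) (K2 x1 y1))) (K1))) (cop C v))) (L0)) :: 'z::comm_monoid_add)"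
  by (rule sl_cong, rule block7)

lemmas hoists = hoistu1 hoistv1 hoistu2 hoistv2 hoistu3 hoistv3 hoistu4 hoistv4 hoistu5 hoistv5 hoistu6 hoistv6 hoistu7 hoistv7

lemmas sw_simps = sl_concat map_concat map_map o_def prod.case_distrib sl_plus sl_zero sl_cmult sl_multc

section \<open>Coalgebra rules\<close>

context
  fixes C :: "('k::field, 'v::ab_group_add) bistr"
  assumes co: "coalg C"
begin

lemma vsC: "vector_space (scl C)" using co unfolding coalg_def by auto

lemma cs_add: "bil (scl C) (scl C) \<Phi> \<Longrightarrow>
  sum_list (map (\<lambda>(u,v). \<Phi> u v) (cop C (x + y))) =
  sum_list (map (\<lambda>(u,v). \<Phi> u v) (cop C x)) + sum_list (map (\<lambda>(u,v). \<Phi> u v) (cop C y))"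
  using teq2_use[of "scl C" "scl C" "cop C (x+y)" "cop C x @ cop C y" \<Phi>] co vsC
  unfolding coalg_def by auto

lemma cs_scale: "bil (scl C) (scl C) \<Phi> \<Longrightarrow>
  sum_list (map (\<lambda>(u,v). \<Phi> u v) (cop C (scl C c x))) =
  c * sum_list (map (\<lambda>(u,v). \<Phi> u v) (cop C x))"
proof -
  assume b: "bil (scl C) (scl C) \<Phi>"
  have "sum_list (map (\<lambda>(u,v). \<Phi> u v) (cop C (scl C c x))) =
     sum_list (map (\<lambda>(u,v). \<Phi> u v) [(scl C c u, v). (u, v) \<leftarrow> cop C x])"
    using teq2_use[of "scl C" "scl C" "cop C (scl C c x)" "[(scl C c u, v). (u, v) \<leftarrow> cop C x]" \<Phi>] co vsC b
    unfolding coalg_def by blast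
  also have "\<dots> = sum_list (map (\<lambda>(u,v). c * \<Phi> u v) (cop C x))"
    using b unfolding bil_def by (simp add: map_map o_def prod.case_distrib)
  also have "\<dots> = c * sum_list (map (\<lambda>(u,v). \<Phi> u v) (cop C x))"
    by (simp only: sl_cmult)
  finally show ?thesis .
qed

lemma coassoc: "tril (scl C) (scl C) (scl C) \<Phi> \<Longrightarrow>
  sum_list (map (\<lambda>(u,v). sum_list (map (\<lambda>(u1,u2). \<Phi> u1 u2 v) (cop C u))) (cop C x)) =
  sum_list (map (\<lambda>(u,v). sum_list (map (\<lambda>(v1,v2). \<Phi> u v1 v2) (cop C v))) (cop C x))"
proof -
  assume t: "tril (scl C) (scl C) (scl C) \<Phi>"
  have "sum_list (map (\<lambda>(u,v,w). \<Phi> u v w) (cop3 C x)) =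
     sum_list (map (\<lambda>(u,v,w). \<Phi> u v w) [(u, v1, v2). (u, v) \<leftarrow> cop C x, (v1, v2) \<leftarrow> cop C v])"
    using teq3_use[of "scl C" "scl C" "scl C" "cop3 C x" "[(u, v1, v2). (u, v) \<leftarrow> cop C x, (v1, v2) \<leftarrow> cop C v]" \<Phi>] co vsC t
    unfolding coalg_def by blast
  then show ?thesis unfolding cop3_def by (simp add: sl_concat map_concat map_map o_def prod.case_distrib)
qed

lemma counit_l: "lin (scl C) G \<Longrightarrow> sum_list (map (\<lambda>(u,v). cou C u * G v) (cop C x)) = G x"
proof -
  assume G: "lin (scl C) G"
  have "G x = G (sum_list [scl C (cou C u) v. (u, v) \<leftarrow> cop C x])" using co unfolding coalg_def by auto
  also have "\<dots> = sum_list (map (\<lambda>(u,v). cou C u * G v) (cop C x))"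
    using G by (simp add: lin_sum_list map_map o_def prod.case_distrib) (simp add: lin_def)
  finally show ?thesis by simp
qed

lemma counit_r: "lin (scl C) G \<Longrightarrow> sum_list (map (\<lambda>(u,v). cou C v * G u) (cop C x)) = G x"
proof -
  assume G: "lin (scl C) G"
  have "G x = G (sum_list [scl C (cou C v) u. (u, v) \<leftarrow> cop C x])" using co unfolding coalg_def by auto
  also have "\<dots> = sum_list (map (\<lambda>(u,v). cou C v * G u) (cop C x))"
    using G by (simp add: lin_sum_list map_map o_def prod.case_distrib) (simp add: lin_def)
  finally show ?thesis by simp
qed

end


lemma bilinD:
  assumes "bilin s1 s2 s3 m"
  shows "m (x + x') = (\<lambda>y. m x y + m x' y)" "m x (y + y') = m x y + m x y'"
    "m (s1 c x) = (\<lambda>y. s3 c (m x y))" "m x (s2 c y) = s3 c (m x y)"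
  using assms unfolding bilin_def linear_iff by auto

lemma bilD:
  assumes "bil s1 s2 m"
  shows "m (x + x') = (\<lambda>y. m x y + m x' y)" "m x (y + y') = m x y + m x y'"
    "m (s1 c x) = (\<lambda>y. c * m x y)" "m x (s2 c y) = c * m x y"
  using assms unfolding bil_def by auto

lemma linD:
  assumes "lin_form s G"
  shows "G (x + x') = G x + G x'" "G (s c x) = c * G x"
  using assms unfolding lin_form_def linear_iff by auto

locale xctx =
  fixes A :: "('k::field, 'a::ab_group_add) bistr" and H :: "('k, 'h::ab_group_add) bistr"
    and ra :: "'h \<Rightarrow> 'a \<Rightarrow> 'h" and la :: "'h \<Rightarrow> 'a \<Rightarrow> 'a" and f :: "'h \<Rightarrow> 'h \<Rightarrow> 'a"
  assumes bA: "bialg A" and ed: "ext_datum A H ra la f" and rat: "\<forall>h a. ra h a = scl H (cou A a) h"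
begin

lemma coA: "coalg A" using bA unfolding bialg_def by auto
lemma coH: "coalg H" using ed unfolding ext_datum_def by auto
lemma algA: "alg A" using bA unfolding bialg_def by auto
lemma vsA: "vector_space (scl A)" using coA unfolding coalg_def by auto
lemma vsH: "vector_space (scl H)" using coH unfolding coalg_def by auto

lemma raE[simp]: "ra h a = scl H (cou A a) h" using rat by auto

lemma mA_bil: "bilin (scl A) (scl A) (scl A) (mul A)" using algA unfolding alg_def by auto
lemma mH_bil: "bilin (scl H) (scl H) (scl H) (mul H)" using ed unfolding ext_datum_def by auto
lemma la_map: "coalg_map2 H A A la" using ed unfolding ext_datum_def by auto
lemma f_map: "coalg_map2 H H A f" using ed unfolding ext_datum_def by auto
lemma la_bil: "bilin (scl H) (scl A) (scl A) la" using la_map unfolding coalg_map2_def by auto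
lemma f_bil: "bilin (scl H) (scl H) (scl A) f" using f_map unfolding coalg_map2_def by auto
lemma couA_lin: "lin_form (scl A) (cou A)" using coA unfolding coalg_def by auto
lemma couH_lin: "lin_form (scl H) (cou H)" using coH unfolding coalg_def by auto

lemmas mA_lin[simp] = bilinD[OF mA_bil]
lemmas mH_lin[simp] = bilinD[OF mH_bil]
lemmas la_lin[simp] = bilinD[OF la_bil]
lemmas f_lin[simp] = bilinD[OF f_bil]
lemmas couA_l[simp] = linD[OF couA_lin]
lemmas couH_l[simp] = linD[OF couH_lin]

interpretation vA: vector_space "scl A" by (rule vsA)
interpretation vH: vector_space "scl H" by (rule vsH)
lemmas sA_simps[simp] = vA.scale_right_distrib vA.scale_left_distrib vA.scale_scale vA.scale_one
   vA.scale_zero_left vA.scale_zero_right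
lemmas sH_simps[simp] = vH.scale_right_distrib vH.scale_left_distrib vH.scale_scale vH.scale_one
   vH.scale_zero_left vH.scale_zero_right

lemma mA_assoc[simp]: "mul A (mul A x y) z = mul A x (mul A y z)" using algA unfolding alg_def by auto
lemma mA_one[simp]: "mul A (one A) x = x" "mul A x (one A) = x" using algA unfolding alg_def by auto
lemma mH_one[simp]: "mul H (one H) x = x" "mul H x (one H) = x" using ed unfolding ext_datum_def by auto
lemma couA_mul[simp]: "cou A (mul A x y) = cou A x * cou A y" and couA_one[simp]: "cou A (one A) = 1"
  using bA unfolding bialg_def by auto
lemma couA_la[simp]: "cou A (la h a) = cou H h * cou A a" using la_map unfolding coalg_map2_def by auto
lemma couA_f[simp]: "cou A (f g h) = cou H g * cou H h" using f_map unfolding coalg_map2_def by auto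
lemma la_one[simp]: "la h (one A) = scl A (cou H h) (one A)" "la (one H) a = a"
  using ed unfolding ext_datum_def by auto
lemma f_one[simp]: "f h (one H) = scl A (cou H h) (one A)" "f (one H) h = scl A (cou H h) (one A)"
  using ed unfolding ext_datum_def by auto

lemma cs_addA[simp]: "bil (scl A) (scl A) \<Phi> \<Longrightarrow>
  sum_list (map (\<lambda>(u,v). \<Phi> u v) (cop A (x + y))) =
  sum_list (map (\<lambda>(u,v). \<Phi> u v) (cop A x)) + sum_list (map (\<lambda>(u,v). \<Phi> u v) (cop A y))"
  by (rule cs_add[OF coA])
lemma cs_addH[simp]: "bil (scl H) (scl H) \<Phi> \<Longrightarrow>
  sum_list (map (\<lambda>(u,v). \<Phi> u v) (cop H (x + y))) =
  sum_list (map (\<lambda>(u,v). \<Phi> u v) (cop H x)) + sum_list (map (\<lambda>(u,v). \<Phi> u v) (cop H y))"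
  by (rule cs_add[OF coH])
lemma cs_scaleA[simp]: "bil (scl A) (scl A) \<Phi> \<Longrightarrow>
  sum_list (map (\<lambda>(u,v). \<Phi> u v) (cop A (scl A c x))) = c * sum_list (map (\<lambda>(u,v). \<Phi> u v) (cop A x))"
  by (rule cs_scale[OF coA])
lemma cs_scaleH[simp]: "bil (scl H) (scl H) \<Phi> \<Longrightarrow>
  sum_list (map (\<lambda>(u,v). \<Phi> u v) (cop H (scl H c x))) = c * sum_list (map (\<lambda>(u,v). \<Phi> u v) (cop H x))"
  by (rule cs_scale[OF coH])


lemma copH_one[simp]: "bil (scl H) (scl H) \<Phi> \<Longrightarrow> sum_list (map (\<lambda>(u,v). \<Phi> u v) (cop H (one H))) = \<Phi> (one H) (one H)"
proof -
  have "teq2 (scl H) (scl H) (cop H (one H)) [(one H, one H)]" using ed unfolding ext_datum_def by blast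
  moreover assume "bil (scl H) (scl H) \<Phi>"
  ultimately show ?thesis using teq2_use[of "scl H" "scl H" "cop H (one H)" "[(one H, one H)]" \<Phi>] vsH by simp
qed
lemma copA_one[simp]: "bil (scl A) (scl A) \<Phi> \<Longrightarrow> sum_list (map (\<lambda>(u,v). \<Phi> u v) (cop A (one A))) = \<Phi> (one A) (one A)"
proof -
  have "teq2 (scl A) (scl A) (cop A (one A)) [(one A, one A)]" using bA unfolding bialg_def by blast
  moreover assume "bil (scl A) (scl A) \<Phi>"
  ultimately show ?thesis using teq2_use[of "scl A" "scl A" "cop A (one A)" "[(one A, one A)]" \<Phi>] vsA by simp
qed

lemma counitH_auto_l: "(\<forall>u v. P u v = cou H u * P (one H) v) \<Longrightarrow> lin (scl H) (P (one H)) \<Longrightarrow>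
   sum_list (map (\<lambda>(u,v). P u v) (cop H x)) = P (one H) x"
proof -
  assume a: "\<forall>u v. P u v = cou H u * P (one H) v" and l: "lin (scl H) (P (one H))"
  have "sum_list (map (\<lambda>(u,v). P u v) (cop H x)) = sum_list (map (\<lambda>(u,v). cou H u * P (one H) v) (cop H x))"
    by (rule sl_cong) (rule a[rule_format])
  also have "\<dots> = P (one H) x" by (rule counit_l[OF coH l])
  finally show ?thesis .
qed
lemma counitH_auto_r: "(\<forall>u v. P u v = cou H v * P u (one H)) \<Longrightarrow> lin (scl H) (\<lambda>u. P u (one H)) \<Longrightarrow>
   sum_list (map (\<lambda>(u,v). P u v) (cop H x)) = P x (one H)"
proof -
  assume a: "\<forall>u v. P u v = cou H v * P u (one H)" and l: "lin (scl H) (\<lambda>u. P u (one H))"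
  have "sum_list (map (\<lambda>(u,v). P u v) (cop H x)) = sum_list (map (\<lambda>(u,v). cou H v * P u (one H)) (cop H x))"
    by (rule sl_cong) (rule a[rule_format])
  also have "\<dots> = P x (one H)" by (rule counit_r[OF coH l])
  finally show ?thesis .
qed
lemma counitA_auto_l: "(\<forall>u v. P u v = cou A u * P (one A) v) \<Longrightarrow> lin (scl A) (P (one A)) \<Longrightarrow>
   sum_list (map (\<lambda>(u,v). P u v) (cop A x)) = P (one A) x"
proof -
  assume a: "\<forall>u v. P u v = cou A u * P (one A) v" and l: "lin (scl A) (P (one A))"
  have "sum_list (map (\<lambda>(u,v). P u v) (cop A x)) = sum_list (map (\<lambda>(u,v). cou A u * P (one A) v) (cop A x))"
    by (rule sl_cong) (rule a[rule_format])
  also have "\<dots> = P (one A) x" by (rule counit_l[OF coA l])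
  finally show ?thesis .
qed
lemma counitA_auto_r: "(\<forall>u v. P u v = cou A v * P u (one A)) \<Longrightarrow> lin (scl A) (\<lambda>u. P u (one A)) \<Longrightarrow>
   sum_list (map (\<lambda>(u,v). P u v) (cop A x)) = P x (one A)"
proof -
  assume a: "\<forall>u v. P u v = cou A v * P u (one A)" and l: "lin (scl A) (\<lambda>u. P u (one A))"
  have "sum_list (map (\<lambda>(u,v). P u v) (cop A x)) = sum_list (map (\<lambda>(u,v). cou A v * P u (one A)) (cop A x))"
    by (rule sl_cong) (rule a[rule_format])
  also have "\<dots> = P x (one A)" by (rule counit_r[OF coA l])
  finally show ?thesis .
qed

lemmas LS = sw_simps bil_def tril_def lin_def ring_distribs mult_ac add_ac

lemma smash_eval:
  assumes b: "bil (scl A) (scl H) \<beta>"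
  shows "sum_list (map (\<lambda>(x,y). \<beta> x y) (smash A H ra la f (a, h) (c, g))) =
   sum_list (map (\<lambda>(hh,h3). sum_list (map (\<lambda>(h1,h2). sum_list (map (\<lambda>(g1,g2).
      \<beta> (mul A a (mul A (la h1 c) (f h2 g1))) (mul H h3 g2)) (cop H g))) (cop H hh))) (cop H h))"
proof -
  note bb[simp] = bilD[OF b]
  have "sum_list (map (\<lambda>(x,y). \<beta> x y) (smash A H ra la f (a, h) (c, g))) =
   sum_list (map (\<lambda>(hh,h3). sum_list (map (\<lambda>(h1,h2).
     sum_list (map (\<lambda>(cc,c3). cou A c3 * sum_list (map (\<lambda>(c1,c2). cou A c2 * sum_list (map (\<lambda>(g1,g2).
      \<beta> (mul A a (mul A (la h1 c1) (f h2 g1))) (mul H h3 g2)) (cop H g))) (cop A cc))) (cop A c))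
     ) (cop H hh))) (cop H h))"
    unfolding smash_def cop3_def by (simp add: LS)
  also have "\<dots> = sum_list (map (\<lambda>(hh,h3). sum_list (map (\<lambda>(h1,h2). sum_list (map (\<lambda>(g1,g2).
      \<beta> (mul A a (mul A (la h1 c) (f h2 g1))) (mul H h3 g2)) (cop H g))) (cop H hh))) (cop H h))"
    apply (subst counit_r[OF coA])
    apply (simp add: LS)
    apply (subst counit_r[OF coA])
    apply (simp add: LS)
    apply (rule refl)
    done
  finally show ?thesis .
qed

end


lemma self_add_zero: "(x::'a::ab_group_add) = x + x \<Longrightarrow> x = 0" by simp

lemma pull_sum: "(\<forall>x y. G (x + y) = G x + G y) \<Longrightarrow> G 0 = 0 \<Longrightarrow>
  G (sum_list (map (\<lambda>(u,v). F u v) L)) = sum_list (map (\<lambda>(u,v). G (F u v)) L)"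
  by (induct L) auto

lemma form4D:
  assumes "form4 s1 s2 s3 s4 \<beta>"
  shows "\<beta> (x + x') = (\<lambda>y z w. \<beta> x y z w + \<beta> x' y z w)" "\<beta> x (y + y') = (\<lambda>z w. \<beta> x y z w + \<beta> x y' z w)"
    "\<beta> x y (z + z') = (\<lambda>w. \<beta> x y z w + \<beta> x y z' w)" "\<beta> x y z (w + w') = \<beta> x y z w + \<beta> x y z w'"
    "\<beta> (s1 c x) = (\<lambda>y z w. c * \<beta> x y z w)" "\<beta> x (s2 c y) = (\<lambda>z w. c * \<beta> x y z w)"
    "\<beta> x y (s3 c z) = (\<lambda>w. c * \<beta> x y z w)" "\<beta> x y z (s4 c w) = c * \<beta> x y z w"
  using assms unfolding form4_def lin_form_def linear_iff by (auto simp: fun_eq_iff)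

context xctx begin

lemma coassocA[simp]: "tril (scl A) (scl A) (scl A) \<Phi> \<Longrightarrow>
  sum_list (map (\<lambda>(u,v). sum_list (map (\<lambda>(u1,u2). \<Phi> u1 u2 v) (cop A u))) (cop A x)) =
  sum_list (map (\<lambda>(u,v). sum_list (map (\<lambda>(v1,v2). \<Phi> u v1 v2) (cop A v))) (cop A x))"
  by (rule coassoc[OF coA])
lemma coassocH[simp]: "tril (scl H) (scl H) (scl H) \<Phi> \<Longrightarrow>
  sum_list (map (\<lambda>(u,v). sum_list (map (\<lambda>(u1,u2). \<Phi> u1 u2 v) (cop H u))) (cop H x)) =
  sum_list (map (\<lambda>(u,v). sum_list (map (\<lambda>(v1,v2). \<Phi> u v1 v2) (cop H v))) (cop H x))"
  by (rule coassoc[OF coH])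

lemma smash_eval_simp[simp]: "bil (scl A) (scl H) \<beta> \<Longrightarrow> sum_list (map (\<lambda>(x,y). \<beta> x y) (smash A H ra la f (a, h) (c, g))) =
   sum_list (map (\<lambda>(hh,h3). sum_list (map (\<lambda>(h1,h2). sum_list (map (\<lambda>(g1,g2).
      \<beta> (mul A a (mul A (la h1 c) (f h2 g1))) (mul H h3 g2)) (cop H g))) (cop H hh))) (cop H h))"
  by (rule smash_eval)

lemma mA_zero[simp]: "mul A 0 x = 0" "mul A x 0 = 0"
  using fun_cong[OF mA_lin(1)[of 0 0], of x] mA_lin(2)[of x 0 0] by auto
lemma la_zero[simp]: "la h 0 = 0" "la 0 a = 0"
  using fun_cong[OF la_lin(1)[of 0 0], of a] la_lin(2)[of h 0 0] by auto
lemma mA_sum[simp]: "mul A (sum_list (map (\<lambda>(u,v). F u v) L)) y = sum_list (map (\<lambda>(u,v). mul A (F u v) y) L)"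
  "mul A y (sum_list (map (\<lambda>(u,v). F u v) L)) = sum_list (map (\<lambda>(u,v). mul A y (F u v)) L)"
  by (rule pull_sum; simp)+
lemma la_sum[simp]: "la h (sum_list (map (\<lambda>(u,v). F u v) L)) = sum_list (map (\<lambda>(u,v). la h (F u v)) L)"
  by (rule pull_sum; simp)+

lemma bil_sum: "bil s1 s2 \<beta> \<Longrightarrow> \<beta> (sum_list (map (\<lambda>(u,v). F u v) L)) y = sum_list (map (\<lambda>(u,v). \<beta> (F u v) y) L)"
  apply (rule pull_sum[where G="\<lambda>x. \<beta> x y"])
  apply (simp add: bil_def)
  using fun_cong[OF bilD(1)[of s1 s2 \<beta> 0 0], of y] by (intro self_add_zero) simp


lemma copA_mul[simp]: "bil (scl A) (scl A) \<Phi> \<Longrightarrow>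
  sum_list (map (\<lambda>(u,v). \<Phi> u v) (cop A (mul A x y))) =
  sum_list (map (\<lambda>(x1,x2). sum_list (map (\<lambda>(y1,y2). \<Phi> (mul A x1 y1) (mul A x2 y2)) (cop A y))) (cop A x))"
proof -
  have "teq2 (scl A) (scl A) (cop A (mul A x y)) [(mul A x1 y1, mul A x2 y2). (x1, x2) \<leftarrow> cop A x, (y1, y2) \<leftarrow> cop A y]"
    using bA unfolding bialg_def by blast
  moreover assume "bil (scl A) (scl A) \<Phi>"
  ultimately show ?thesis using teq2_use vsA by (fastforce simp: sw_simps)
qed
lemma copA_la[simp]: "bil (scl A) (scl A) \<Phi> \<Longrightarrow>
  sum_list (map (\<lambda>(u,v). \<Phi> u v) (cop A (la x y))) =
  sum_list (map (\<lambda>(x1,x2). sum_list (map (\<lambda>(y1,y2). \<Phi> (la x1 y1) (la x2 y2)) (cop A y))) (cop H x))"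
proof -
  have "teq2 (scl A) (scl A) (cop A (la x y)) [(la x1 y1, la x2 y2). (x1, x2) \<leftarrow> cop H x, (y1, y2) \<leftarrow> cop A y]"
    using la_map unfolding coalg_map2_def by blast
  moreover assume "bil (scl A) (scl A) \<Phi>"
  ultimately show ?thesis using teq2_use vsA by (fastforce simp: sw_simps)
qed
lemma copA_f[simp]: "bil (scl A) (scl A) \<Phi> \<Longrightarrow>
  sum_list (map (\<lambda>(u,v). \<Phi> u v) (cop A (f x y))) =
  sum_list (map (\<lambda>(x1,x2). sum_list (map (\<lambda>(y1,y2). \<Phi> (f x1 y1) (f x2 y2)) (cop H y))) (cop H x))"
proof -
  have "teq2 (scl A) (scl A) (cop A (f x y)) [(f x1 y1, f x2 y2). (x1, x2) \<leftarrow> cop H x, (y1, y2) \<leftarrow> cop H y]"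
    using f_map unfolding coalg_map2_def by blast
  moreover assume "bil (scl A) (scl A) \<Phi>"
  ultimately show ?thesis using teq2_use vsA by (fastforce simp: sw_simps)
qed

lemmas ENG = LS hoists

lemma sl_pull: "sum_list (map (\<lambda>(u,v). (c::'k) * F u v) L) = c * sum_list (map (\<lambda>(u,v). F u v) L)"
  by (rule sl_cmult[symmetric])

lemmas CNT = sl_concat map_concat map_map o_def prod.case_distrib sl_plus sl_zero sl_pull
   bil_def tril_def lin_def ring_distribs mult_ac add_ac hoists
   counit_l[OF coH] counit_r[OF coH] counit_l[OF coA] counit_r[OF coA]

end

locale conv = xctx +
  assumes hB: "bialg H"
  and c1: "\<forall>g h a.
               sum_list [mul A (la g1 (la h1 a)) (f g2 h2). (g1, g2) \<leftarrow> cop H g, (h1, h2) \<leftarrow> cop H h]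
             = sum_list [mul A (f g1 h1) (la (mul H g2 h2) a). (g1, g2) \<leftarrow> cop H g, (h1, h2) \<leftarrow> cop H h]"
  and c2: "\<forall>g h l.
               sum_list [mul A (la g1 (f h1 l1)) (f g2 (mul H h2 l2)).
                          (g1, g2) \<leftarrow> cop H g, (h1, h2) \<leftarrow> cop H h, (l1, l2) \<leftarrow> cop H l]
             = sum_list [mul A (f g1 h1) (f (mul H g2 h2) l). (g1, g2) \<leftarrow> cop H g, (h1, h2) \<leftarrow> cop H h]"
  and c3: "\<forall>g a b. la g (mul A a b) = sum_list [mul A (la g1 a) (la g2 b). (g1, g2) \<leftarrow> cop H g]"
  and c4: "\<forall>g a. teq2 (scl H) (scl A) [(g1, la g2 a). (g1, g2) \<leftarrow> cop H g]
                                        [(g2, la g1 a). (g1, g2) \<leftarrow> cop H g]"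
  and c5: "\<forall>g h. teq2 (scl H) (scl A)
                     [(mul H g1 h1, f g2 h2). (g1, g2) \<leftarrow> cop H g, (h1, h2) \<leftarrow> cop H h]
                     [(mul H g2 h2, f g1 h1). (g1, g2) \<leftarrow> cop H g, (h1, h2) \<leftarrow> cop H h]"
begin

lemma algH: "alg H" using hB unfolding bialg_def by auto
lemma mH_assoc[simp]: "mul H (mul H x y) z = mul H x (mul H y z)" using algH unfolding alg_def by auto
lemma couH_mul[simp]: "cou H (mul H x y) = cou H x * cou H y" and couH_one[simp]: "cou H (one H) = 1"
  using hB unfolding bialg_def by auto
lemma copH_mul[simp]: "bil (scl H) (scl H) \<Phi> \<Longrightarrow>
  sum_list (map (\<lambda>(u,v). \<Phi> u v) (cop H (mul H x y))) =
  sum_list (map (\<lambda>(x1,x2). sum_list (map (\<lambda>(y1,y2). \<Phi> (mul H x1 y1) (mul H x2 y2)) (cop H y))) (cop H x))"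
proof -
  have "teq2 (scl H) (scl H) (cop H (mul H x y)) [(mul H x1 y1, mul H x2 y2). (x1, x2) \<leftarrow> cop H x, (y1, y2) \<leftarrow> cop H y]"
    using hB unfolding bialg_def by blast
  moreover assume "bil (scl H) (scl H) \<Phi>"
  ultimately show ?thesis using teq2_use vsH by (fastforce simp: sw_simps)
qed
lemma meas[simp]: "la g (mul A a b) = sum_list (map (\<lambda>(g1,g2). mul A (la g1 a) (la g2 b)) (cop H g))"
  using c3 by simp

lemma C1_use: "lin (scl A) \<Psi> \<Longrightarrow>
  sum_list (map (\<lambda>(g1,g2). sum_list (map (\<lambda>(h1,h2). \<Psi> (mul A (la g1 (la h1 a)) (f g2 h2))) (cop H h))) (cop H g)) =
  sum_list (map (\<lambda>(g1,g2). sum_list (map (\<lambda>(h1,h2). \<Psi> (mul A (f g1 h1) (la (mul H g2 h2) a))) (cop H h))) (cop H g))"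
proof -
  assume l: "lin (scl A) \<Psi>"
  have "\<Psi> (sum_list [mul A (la g1 (la h1 a)) (f g2 h2). (g1, g2) \<leftarrow> cop H g, (h1, h2) \<leftarrow> cop H h])
      = \<Psi> (sum_list [mul A (f g1 h1) (la (mul H g2 h2) a). (g1, g2) \<leftarrow> cop H g, (h1, h2) \<leftarrow> cop H h])"
    using c1 by simp
  then show ?thesis using l by (simp add: lin_sum_list sw_simps)
qed


lemma C2_use: "lin (scl A) \<Psi> \<Longrightarrow>
  sum_list (map (\<lambda>(g1,g2). sum_list (map (\<lambda>(h1,h2). sum_list (map (\<lambda>(l1,l2).
     \<Psi> (mul A (la g1 (f h1 l1)) (f g2 (mul H h2 l2)))) (cop H l))) (cop H h))) (cop H g)) =
  sum_list (map (\<lambda>(g1,g2). sum_list (map (\<lambda>(h1,h2). \<Psi> (mul A (f g1 h1) (f (mul H g2 h2) l))) (cop H h))) (cop H g))"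
proof -
  assume l: "lin (scl A) \<Psi>"
  have "\<Psi> (sum_list [mul A (la g1 (f h1 l1)) (f g2 (mul H h2 l2)).
                          (g1, g2) \<leftarrow> cop H g, (h1, h2) \<leftarrow> cop H h, (l1, l2) \<leftarrow> cop H l])
      = \<Psi> (sum_list [mul A (f g1 h1) (f (mul H g2 h2) l). (g1, g2) \<leftarrow> cop H g, (h1, h2) \<leftarrow> cop H h])"
    using c2 by simp
  then show ?thesis using l by (simp add: lin_sum_list sw_simps)
qed


lemma C4_use: "bil (scl H) (scl A) \<Phi> \<Longrightarrow>
  sum_list (map (\<lambda>(u,v). \<Phi> u (la v a)) (cop H g)) = sum_list (map (\<lambda>(u,v). \<Phi> v (la u a)) (cop H g))"
  using teq2_use[OF c4[rule_format, where g=g and a=a] vsH vsA] by (simp add: sw_simps)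

lemma C5_use: "bil (scl H) (scl A) \<Phi> \<Longrightarrow>
  sum_list (map (\<lambda>(g1,g2). sum_list (map (\<lambda>(h1,h2). \<Phi> (mul H g1 h1) (f g2 h2)) (cop H h))) (cop H g)) =
  sum_list (map (\<lambda>(g1,g2). sum_list (map (\<lambda>(h1,h2). \<Phi> (mul H g2 h2) (f g1 h1)) (cop H h))) (cop H g))"
  using teq2_use[OF c5[rule_format, where g=g and h=h] vsH vsA] by (simp add: sw_simps)

lemma ASSOC:
  assumes b: "bil (scl A) (scl H) \<beta>"
  shows "sum_list (map (\<lambda>(x,y). sum_list (map (\<lambda>(x',y'). \<beta> x' y') (smash A H ra la f (x, y) (c, l)))) (smash A H ra la f (a, h) (b, g)))
   = sum_list (map (\<lambda>(x,y). sum_list (map (\<lambda>(x',y'). \<beta> x' y') (smash A H ra la f (a, h) (x, y)))) (smash A H ra la f (b, g) (c, l)))"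
proof -
  note bb[simp] = bilD[OF b] bil_sum[OF b]
  have "sum_list (map (\<lambda>(x,y). sum_list (map (\<lambda>(x',y'). \<beta> x' y') (smash A H ra la f (x, y) (c, l)))) (smash A H ra la f (a, h) (b, g)))
   = sum_list (map (\<lambda>(h1,r1). sum_list (map (\<lambda>(M,r2). sum_list (map (\<lambda>(h4,h5).
     sum_list (map (\<lambda>(N,s1). sum_list (map (\<lambda>(g3,g4). sum_list (map (\<lambda>(l1,l2).
     sum_list (map (\<lambda>(m1,m2). sum_list (map (\<lambda>(n1,n2).
       \<beta> (mul A a (mul A (la h1 b) (mul A (mul A (f m1 n1) (la (mul H m2 n2) c)) (f (mul H h4 g3) l1))))
         (mul H h5 (mul H g4 l2))
     ) (cop H N))) (cop H M))) (cop H l))) (cop H s1))) (cop H g))) (cop H r2))) (cop H r1))) (cop H h))"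
    by (simp add: ENG, (simp add: CNT)?)
  also have "\<dots> = sum_list (map (\<lambda>(h1,r1). sum_list (map (\<lambda>(M,r2). sum_list (map (\<lambda>(h4,h5).
     sum_list (map (\<lambda>(N,s1). sum_list (map (\<lambda>(g3,g4). sum_list (map (\<lambda>(l1,l2).
     sum_list (map (\<lambda>(m1,m2). sum_list (map (\<lambda>(n1,n2).
       \<beta> (mul A a (mul A (la h1 b) (mul A (mul A (la m1 (la n1 c)) (f m2 n2)) (f (mul H h4 g3) l1))))
         (mul H h5 (mul H g4 l2))
     ) (cop H N))) (cop H M))) (cop H l))) (cop H s1))) (cop H g))) (cop H r2))) (cop H r1))) (cop H h))"
  proof -
    have key: "\<And>h1 h4 h5 g3 g4 l1 l2 M N. sum_list (map (\<lambda>(m1,m2). sum_list (map (\<lambda>(n1,n2).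
       \<beta> (mul A a (mul A (la h1 b) (mul A (mul A (f m1 n1) (la (mul H m2 n2) c)) (f (mul H h4 g3) l1))))
         (mul H h5 (mul H g4 l2))) (cop H N))) (cop H M)) =
       sum_list (map (\<lambda>(m1,m2). sum_list (map (\<lambda>(n1,n2).
       \<beta> (mul A a (mul A (la h1 b) (mul A (mul A (la m1 (la n1 c)) (f m2 n2)) (f (mul H h4 g3) l1))))
         (mul H h5 (mul H g4 l2))) (cop H N))) (cop H M))"
      by (rule C1_use[where \<Psi>="\<lambda>z. \<beta> (mul A a (mul A (la _ b) (mul A z (f (mul H _ _) _)))) (mul H _ (mul H _ _))", symmetric])
         (simp add: lin_def)
    show ?thesis by (simp only: key)
  qed
  also have "\<dots> = sum_list (map (\<lambda>(h1,r1). sum_list (map (\<lambda>(h2,r2). sum_list (map (\<lambda>(M,h5).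
     sum_list (map (\<lambda>(g1,s1). sum_list (map (\<lambda>(N,g4). sum_list (map (\<lambda>(L,l2).
     sum_list (map (\<lambda>(m1,m2). sum_list (map (\<lambda>(n1,n2).
       \<beta> (mul A a (mul A (la h1 b) (mul A (la h2 (la g1 c)) (mul A (f m1 n1) (f (mul H m2 n2) L)))))
         (mul H h5 (mul H g4 l2))
     ) (cop H N))) (cop H M))) (cop H l))) (cop H s1))) (cop H g))) (cop H r2))) (cop H r1))) (cop H h))"
    by (simp add: ENG, (simp add: CNT)?)
  also have "\<dots> = sum_list (map (\<lambda>(h1,r1). sum_list (map (\<lambda>(h2,r2). sum_list (map (\<lambda>(M,h5).
     sum_list (map (\<lambda>(g1,s1). sum_list (map (\<lambda>(N,g4). sum_list (map (\<lambda>(L,l2).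
     sum_list (map (\<lambda>(m1,m2). sum_list (map (\<lambda>(n1,n2). sum_list (map (\<lambda>(L1,L2).
       \<beta> (mul A a (mul A (la h1 b) (mul A (la h2 (la g1 c)) (mul A (la m1 (f n1 L1)) (f m2 (mul H n2 L2))))))
         (mul H h5 (mul H g4 l2))
     ) (cop H L))) (cop H N))) (cop H M))) (cop H l))) (cop H s1))) (cop H g))) (cop H r2))) (cop H r1))) (cop H h))"
  proof -
    have key: "\<And>h1 h2 g1 h5 g4 l2 M N L. sum_list (map (\<lambda>(m1,m2). sum_list (map (\<lambda>(n1,n2).
       \<beta> (mul A a (mul A (la h1 b) (mul A (la h2 (la g1 c)) (mul A (f m1 n1) (f (mul H m2 n2) L)))))
         (mul H h5 (mul H g4 l2))) (cop H N))) (cop H M)) =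
       sum_list (map (\<lambda>(m1,m2). sum_list (map (\<lambda>(n1,n2). sum_list (map (\<lambda>(L1,L2).
       \<beta> (mul A a (mul A (la h1 b) (mul A (la h2 (la g1 c)) (mul A (la m1 (f n1 L1)) (f m2 (mul H n2 L2))))))
         (mul H h5 (mul H g4 l2))) (cop H L))) (cop H N))) (cop H M))"
      by (rule C2_use[where \<Psi>="\<lambda>z. \<beta> (mul A a (mul A (la _ b) (mul A (la _ (la _ c)) z))) (mul H _ (mul H _ _))", symmetric])
         (simp add: lin_def)
    show ?thesis by (simp only: key)
  qed
  also have "\<dots> = sum_list (map (\<lambda>(x,y). sum_list (map (\<lambda>(x',y'). \<beta> x' y') (smash A H ra la f (a, h) (x, y)))) (smash A H ra la f (b, g) (c, l)))"
    apply (simp add: ENG)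
    apply (simp add: CNT)
    apply (simp only: sl_swap[where N="cop H h"])
    apply (simp add: ENG)
    done
  finally show ?thesis .
qed

lemma DMUL:
  assumes b: "form4 (scl A) (scl H) (scl A) (scl H) \<beta>"
  shows "sum_list (map (\<lambda>(x,y). sum_list (map (\<lambda>(x1,x2). sum_list (map (\<lambda>(y1,y2). \<beta> x1 y1 x2 y2)
       (cop H y))) (cop A x))) (smash A H ra la f (a, h) (c, g)))
   = sum_list (map (\<lambda>(a1,a2). sum_list (map (\<lambda>(h1,h2). sum_list (map (\<lambda>(c1,c2). sum_list (map (\<lambda>(g1,g2).
       sum_list (map (\<lambda>(x,y). sum_list (map (\<lambda>(x',y'). \<beta> x y x' y') (smash A H ra la f (a2, h2) (c2, g2))))
        (smash A H ra la f (a1, h1) (c1, g1)))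
      ) (cop H g))) (cop A c))) (cop H h))) (cop A a))"
proof -
  note bb[simp] = form4D[OF b]
  have "sum_list (map (\<lambda>(x,y). sum_list (map (\<lambda>(x1,x2). sum_list (map (\<lambda>(y1,y2). \<beta> x1 y1 x2 y2)
       (cop H y))) (cop A x))) (smash A H ra la f (a, h) (c, g))) = sum_list (map (\<lambda>(h1,rh0). sum_list (map (\<lambda>(M,rh1). sum_list (map (\<lambda>(h4,rh2). sum_list (map (\<lambda>(h5,h6). sum_list (map (\<lambda>(g1,rg0). sum_list (map (\<lambda>(g2,rg1). sum_list (map (\<lambda>(g3,g4). sum_list (map (\<lambda>(a1,a2). sum_list (map (\<lambda>(c1,c2). sum_list (map (\<lambda>(m1,m2). \<beta> (mul A a1 (mul A (la h1 c1) (f m2 g1))) (mul H h5 g3) (mul A a2 (mul A (la m1 c2) (f h4 g2))) (mul H h6 g4)) (cop H M))) (cop A c))) (cop A a))) (cop H rg1))) (cop H rg0))) (cop H g))) (cop H rh2))) (cop H rh1))) (cop H rh0))) (cop H h))"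
    by (simp add: ENG, (simp add: CNT)?)
  also have "\<dots> = sum_list (map (\<lambda>(h1,rh0). sum_list (map (\<lambda>(M,rh1). sum_list (map (\<lambda>(h4,rh2). sum_list (map (\<lambda>(h5,h6). sum_list (map (\<lambda>(g1,rg0). sum_list (map (\<lambda>(g2,rg1). sum_list (map (\<lambda>(g3,g4). sum_list (map (\<lambda>(a1,a2). sum_list (map (\<lambda>(c1,c2). sum_list (map (\<lambda>(m1,m2). \<beta> (mul A a1 (mul A (la h1 c1) (f m1 g1))) (mul H h5 g3) (mul A a2 (mul A (la m2 c2) (f h4 g2))) (mul H h6 g4)) (cop H M))) (cop A c))) (cop A a))) (cop H rg1))) (cop H rg0))) (cop H g))) (cop H rh2))) (cop H rh1))) (cop H rh0))) (cop H h))"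
  proof -
    have key: "sum_list (map (\<lambda>(m1,m2). \<beta> (mul A a1 (mul A (la h1 c1) (f m2 g1))) (mul H h5 g3) (mul A a2 (mul A (la m1 c2) (f h4 g2))) (mul H h6 g4)) (cop H M)) =
       sum_list (map (\<lambda>(m1,m2). \<beta> (mul A a1 (mul A (la h1 c1) (f m1 g1))) (mul H h5 g3) (mul A a2 (mul A (la m2 c2) (f h4 g2))) (mul H h6 g4)) (cop H M))" for h1 h4 h5 h6 g1 g2 g3 g4 M a1 a2 c1 c2
      by (rule C4_use[where \<Phi>="\<lambda>x y. \<beta> (mul A a1 (mul A (la h1 c1) (f x g1))) (mul H h5 g3) (mul A a2 (mul A (y) (f h4 g2))) (mul H h6 g4)", symmetric]) (simp add: ENG)
    show ?thesis by (simp only: key)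
  qed
  also have "\<dots> = sum_list (map (\<lambda>(h1,rh0). sum_list (map (\<lambda>(h2,rh1). sum_list (map (\<lambda>(M,rh2). sum_list (map (\<lambda>(h5,h6). sum_list (map (\<lambda>(g1,rg0). sum_list (map (\<lambda>(g2,rg1). sum_list (map (\<lambda>(g3,g4). sum_list (map (\<lambda>(a1,a2). sum_list (map (\<lambda>(c1,c2). sum_list (map (\<lambda>(m1,m2). \<beta> (mul A a1 (mul A (la h1 c1) (f h2 g1))) (mul H h5 g3) (mul A a2 (mul A (la m1 c2) (f m2 g2))) (mul H h6 g4)) (cop H M))) (cop A c))) (cop A a))) (cop H rg1))) (cop H rg0))) (cop H g))) (cop H rh2))) (cop H rh1))) (cop H rh0))) (cop H h))"
    by (simp add: ENG, (simp add: CNT)?)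
  also have "\<dots> = sum_list (map (\<lambda>(h1,rh0). sum_list (map (\<lambda>(h2,rh1). sum_list (map (\<lambda>(M,rh2). sum_list (map (\<lambda>(h5,h6). sum_list (map (\<lambda>(g1,rg0). sum_list (map (\<lambda>(g2,rg1). sum_list (map (\<lambda>(g3,g4). sum_list (map (\<lambda>(a1,a2). sum_list (map (\<lambda>(c1,c2). sum_list (map (\<lambda>(m1,m2). \<beta> (mul A a1 (mul A (la h1 c1) (f h2 g1))) (mul H h5 g3) (mul A a2 (mul A (la m2 c2) (f m1 g2))) (mul H h6 g4)) (cop H M))) (cop A c))) (cop A a))) (cop H rg1))) (cop H rg0))) (cop H g))) (cop H rh2))) (cop H rh1))) (cop H rh0))) (cop H h))"
  proof -
    have key: "sum_list (map (\<lambda>(m1,m2). \<beta> (mul A a1 (mul A (la h1 c1) (f h2 g1))) (mul H h5 g3) (mul A a2 (mul A (la m1 c2) (f m2 g2))) (mul H h6 g4)) (cop H M)) =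
       sum_list (map (\<lambda>(m1,m2). \<beta> (mul A a1 (mul A (la h1 c1) (f h2 g1))) (mul H h5 g3) (mul A a2 (mul A (la m2 c2) (f m1 g2))) (mul H h6 g4)) (cop H M))" for h1 h2 h5 h6 g1 g2 g3 g4 M a1 a2 c1 c2
      by (rule C4_use[where \<Phi>="\<lambda>x y. \<beta> (mul A a1 (mul A (la h1 c1) (f h2 g1))) (mul H h5 g3) (mul A a2 (mul A (y) (f x g2))) (mul H h6 g4)", symmetric]) (simp add: ENG)
    show ?thesis by (simp only: key)
  qed
  also have "\<dots> = sum_list (map (\<lambda>(h1,rh0). sum_list (map (\<lambda>(h2,rh1). sum_list (map (\<lambda>(h3,rh2). sum_list (map (\<lambda>(M,h6). sum_list (map (\<lambda>(g1,rg0). sum_list (map (\<lambda>(g2,rg1). sum_list (map (\<lambda>(g3,g4). sum_list (map (\<lambda>(a1,a2). sum_list (map (\<lambda>(c1,c2). sum_list (map (\<lambda>(m1,m2). \<beta> (mul A a1 (mul A (la h1 c1) (f h2 g1))) (mul H m2 g3) (mul A a2 (mul A (la m1 c2) (f h3 g2))) (mul H h6 g4)) (cop H M))) (cop A c))) (cop A a))) (cop H rg1))) (cop H rg0))) (cop H g))) (cop H rh2))) (cop H rh1))) (cop H rh0))) (cop H h))"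
    by (simp add: ENG, (simp add: CNT)?)
  also have "\<dots> = sum_list (map (\<lambda>(h1,rh0). sum_list (map (\<lambda>(h2,rh1). sum_list (map (\<lambda>(h3,rh2). sum_list (map (\<lambda>(M,h6). sum_list (map (\<lambda>(g1,rg0). sum_list (map (\<lambda>(g2,rg1). sum_list (map (\<lambda>(g3,g4). sum_list (map (\<lambda>(a1,a2). sum_list (map (\<lambda>(c1,c2). sum_list (map (\<lambda>(m1,m2). \<beta> (mul A a1 (mul A (la h1 c1) (f h2 g1))) (mul H m1 g3) (mul A a2 (mul A (la m2 c2) (f h3 g2))) (mul H h6 g4)) (cop H M))) (cop A c))) (cop A a))) (cop H rg1))) (cop H rg0))) (cop H g))) (cop H rh2))) (cop H rh1))) (cop H rh0))) (cop H h))"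
  proof -
    have key: "sum_list (map (\<lambda>(m1,m2). \<beta> (mul A a1 (mul A (la h1 c1) (f h2 g1))) (mul H m2 g3) (mul A a2 (mul A (la m1 c2) (f h3 g2))) (mul H h6 g4)) (cop H M)) =
       sum_list (map (\<lambda>(m1,m2). \<beta> (mul A a1 (mul A (la h1 c1) (f h2 g1))) (mul H m1 g3) (mul A a2 (mul A (la m2 c2) (f h3 g2))) (mul H h6 g4)) (cop H M))" for h1 h2 h3 h6 g1 g2 g3 g4 M a1 a2 c1 c2
      by (rule C4_use[where \<Phi>="\<lambda>x y. \<beta> (mul A a1 (mul A (la h1 c1) (f h2 g1))) (mul H x g3) (mul A a2 (mul A (y) (f h3 g2))) (mul H h6 g4)", symmetric]) (simp add: ENG)
    show ?thesis by (simp only: key)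
  qed
  also have "\<dots> = sum_list (map (\<lambda>(h1,rh0). sum_list (map (\<lambda>(h2,rh1). sum_list (map (\<lambda>(M,rh2). sum_list (map (\<lambda>(h5,h6). sum_list (map (\<lambda>(g1,rg0). sum_list (map (\<lambda>(N,g4). sum_list (map (\<lambda>(a1,a2). sum_list (map (\<lambda>(c1,c2). sum_list (map (\<lambda>(m1,m2). sum_list (map (\<lambda>(n1,n2). \<beta> (mul A a1 (mul A (la h1 c1) (f h2 g1))) (mul H m2 n2) (mul A a2 (mul A (la h5 c2) (f m1 n1))) (mul H h6 g4)) (cop H N))) (cop H M))) (cop A c))) (cop A a))) (cop H rg0))) (cop H g))) (cop H rh2))) (cop H rh1))) (cop H rh0))) (cop H h))"
    by (simp add: ENG, (simp add: CNT)?)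
  also have "\<dots> = sum_list (map (\<lambda>(h1,rh0). sum_list (map (\<lambda>(h2,rh1). sum_list (map (\<lambda>(M,rh2). sum_list (map (\<lambda>(h5,h6). sum_list (map (\<lambda>(g1,rg0). sum_list (map (\<lambda>(N,g4). sum_list (map (\<lambda>(a1,a2). sum_list (map (\<lambda>(c1,c2). sum_list (map (\<lambda>(m1,m2). sum_list (map (\<lambda>(n1,n2). \<beta> (mul A a1 (mul A (la h1 c1) (f h2 g1))) (mul H m1 n1) (mul A a2 (mul A (la h5 c2) (f m2 n2))) (mul H h6 g4)) (cop H N))) (cop H M))) (cop A c))) (cop A a))) (cop H rg0))) (cop H g))) (cop H rh2))) (cop H rh1))) (cop H rh0))) (cop H h))"
  proof -
    have key: "sum_list (map (\<lambda>(m1,m2). sum_list (map (\<lambda>(n1,n2). \<beta> (mul A a1 (mul A (la h1 c1) (f h2 g1))) (mul H m2 n2) (mul A a2 (mul A (la h5 c2) (f m1 n1))) (mul H h6 g4)) (cop H N))) (cop H M)) =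
       sum_list (map (\<lambda>(m1,m2). sum_list (map (\<lambda>(n1,n2). \<beta> (mul A a1 (mul A (la h1 c1) (f h2 g1))) (mul H m1 n1) (mul A a2 (mul A (la h5 c2) (f m2 n2))) (mul H h6 g4)) (cop H N))) (cop H M))" for h1 h2 h5 h6 g1 g4 M N a1 a2 c1 c2
      by (rule C5_use[where \<Phi>="\<lambda>x y. \<beta> (mul A a1 (mul A (la h1 c1) (f h2 g1))) x (mul A a2 (mul A (la h5 c2) y)) (mul H h6 g4)", symmetric]) (simp add: ENG)
    show ?thesis by (simp only: key)
  qed
  also have "\<dots> = sum_list (map (\<lambda>(h1,rh0). sum_list (map (\<lambda>(h2,rh1). sum_list (map (\<lambda>(h3,rh2). sum_list (map (\<lambda>(M,h6). sum_list (map (\<lambda>(g1,rg0). sum_list (map (\<lambda>(g2,rg1). sum_list (map (\<lambda>(g3,g4). sum_list (map (\<lambda>(a1,a2). sum_list (map (\<lambda>(c1,c2). sum_list (map (\<lambda>(m1,m2). \<beta> (mul A a1 (mul A (la h1 c1) (f h2 g1))) (mul H h3 g2) (mul A a2 (mul A (la m2 c2) (f m1 g3))) (mul H h6 g4)) (cop H M))) (cop A c))) (cop A a))) (cop H rg1))) (cop H rg0))) (cop H g))) (cop H rh2))) (cop H rh1))) (cop H rh0))) (cop H h))"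
    by (simp add: ENG, (simp add: CNT)?)
  also have "\<dots> = sum_list (map (\<lambda>(h1,rh0). sum_list (map (\<lambda>(h2,rh1). sum_list (map (\<lambda>(h3,rh2). sum_list (map (\<lambda>(M,h6). sum_list (map (\<lambda>(g1,rg0). sum_list (map (\<lambda>(g2,rg1). sum_list (map (\<lambda>(g3,g4). sum_list (map (\<lambda>(a1,a2). sum_list (map (\<lambda>(c1,c2). sum_list (map (\<lambda>(m1,m2). \<beta> (mul A a1 (mul A (la h1 c1) (f h2 g1))) (mul H h3 g2) (mul A a2 (mul A (la m1 c2) (f m2 g3))) (mul H h6 g4)) (cop H M))) (cop A c))) (cop A a))) (cop H rg1))) (cop H rg0))) (cop H g))) (cop H rh2))) (cop H rh1))) (cop H rh0))) (cop H h))"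
  proof -
    have key: "sum_list (map (\<lambda>(m1,m2). \<beta> (mul A a1 (mul A (la h1 c1) (f h2 g1))) (mul H h3 g2) (mul A a2 (mul A (la m2 c2) (f m1 g3))) (mul H h6 g4)) (cop H M)) =
       sum_list (map (\<lambda>(m1,m2). \<beta> (mul A a1 (mul A (la h1 c1) (f h2 g1))) (mul H h3 g2) (mul A a2 (mul A (la m1 c2) (f m2 g3))) (mul H h6 g4)) (cop H M))" for h1 h2 h3 h6 g1 g2 g3 g4 M a1 a2 c1 c2
      by (rule C4_use[where \<Phi>="\<lambda>x y. \<beta> (mul A a1 (mul A (la h1 c1) (f h2 g1))) (mul H h3 g2) (mul A a2 (mul A (y) (f x g3))) (mul H h6 g4)"]) (simp add: ENG)
    show ?thesis by (simp only: key)
  qed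
  also have "\<dots> = sum_list (map (\<lambda>(a1,a2). sum_list (map (\<lambda>(h1,h2). sum_list (map (\<lambda>(c1,c2). sum_list (map (\<lambda>(g1,g2).
       sum_list (map (\<lambda>(x,y). sum_list (map (\<lambda>(x',y'). \<beta> x y x' y') (smash A H ra la f (a2, h2) (c2, g2))))
        (smash A H ra la f (a1, h1) (c1, g1)))
      ) (cop H g))) (cop A c))) (cop H h))) (cop A a))"
    apply (simp add: ENG)
    apply (simp only: sl_swap[where N="cop A c"])
    apply (simp only: sl_swap[where N="cop A a"])
    done
  finally show ?thesis .
qed

end


lemma slc: "(\<And>x. x \<in> set L \<Longrightarrow> F x = G x) \<Longrightarrow> sum_list (map F L) = sum_list (map G L)"
  by (simp cong: map_cong)

lemma sw_gen: "sum_list (map (\<lambda>x. sum_list (map (\<lambda>y. F x y) N)) M) = (sum_list (map (\<lambda>y. sum_list (map (\<lambda>x. F x y) M)) N) :: 'z::comm_monoid_add)"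
proof (induct M)
  case Nil then show ?case by (induct N) auto
next
  case (Cons a M) then show ?case by (simp add: sum_list_addf)
qed

context xctx begin

lemma smul_sum: "sum_list (map F (smul A H ra la f xs ys)) =
  sum_list (map (\<lambda>p. sum_list (map (\<lambda>q. sum_list (map F (smash A H ra la f p q))) ys)) xs)"
  unfolding smul_def by (simp add: sl_concat map_concat map_map o_def)

end

lemma form6D:
  assumes "form6 s1 s2 s3 s4 s5 s6 \<beta>"
  shows "\<beta> (x1 + x1') = (\<lambda>x2 x3 x4 x5 x6. \<beta> x1 x2 x3 x4 x5 x6 + \<beta> x1' x2 x3 x4 x5 x6)"
    "\<beta> x1 (x2 + x2') = (\<lambda>x3 x4 x5 x6. \<beta> x1 x2 x3 x4 x5 x6 + \<beta> x1 x2' x3 x4 x5 x6)"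
    "\<beta> x1 x2 (x3 + x3') = (\<lambda>x4 x5 x6. \<beta> x1 x2 x3 x4 x5 x6 + \<beta> x1 x2 x3' x4 x5 x6)"
    "\<beta> x1 x2 x3 (x4 + x4') = (\<lambda>x5 x6. \<beta> x1 x2 x3 x4 x5 x6 + \<beta> x1 x2 x3 x4' x5 x6)"
    "\<beta> x1 x2 x3 x4 (x5 + x5') = (\<lambda>x6. \<beta> x1 x2 x3 x4 x5 x6 + \<beta> x1 x2 x3 x4 x5' x6)"
    "\<beta> x1 x2 x3 x4 x5 (x6 + x6') = \<beta> x1 x2 x3 x4 x5 x6 + \<beta> x1 x2 x3 x4 x5 x6'"
    "\<beta> (s1 c x1) = (\<lambda>x2 x3 x4 x5 x6. c * \<beta> x1 x2 x3 x4 x5 x6)"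
    "\<beta> x1 (s2 c x2) = (\<lambda>x3 x4 x5 x6. c * \<beta> x1 x2 x3 x4 x5 x6)"
    "\<beta> x1 x2 (s3 c x3) = (\<lambda>x4 x5 x6. c * \<beta> x1 x2 x3 x4 x5 x6)"
    "\<beta> x1 x2 x3 (s4 c x4) = (\<lambda>x5 x6. c * \<beta> x1 x2 x3 x4 x5 x6)"
    "\<beta> x1 x2 x3 x4 (s5 c x5) = (\<lambda>x6. c * \<beta> x1 x2 x3 x4 x5 x6)"
    "\<beta> x1 x2 x3 x4 x5 (s6 c x6) = c * \<beta> x1 x2 x3 x4 x5 x6"
  using assms unfolding form6_def lin_form_def linear_iff by (auto simp: fun_eq_iff)

lemma sl_prod: "sum_list (map F xs) * sum_list (map G ys) = ( sum_list (map (\<lambda>x. sum_list (map (\<lambda>y. F x * G y) ys)) xs) :: 'z::semiring_0)"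
  by (induct xs) (auto simp: distrib_right sum_list_const_mult)

context xctx begin

lemma UNIT_R: "bil (scl A) (scl H) \<beta> \<Longrightarrow> sum_list (map (\<lambda>(x,y). \<beta> x y) (smash A H ra la f (a, h) (one A, one H))) = \<beta> a h"
  apply (frule bilD(1)) apply (frule bilD(2)) apply (frule bilD(3)) apply (frule bilD(4))
  by (simp add: ENG, (simp add: CNT)?)

lemma UNIT_L: "bil (scl A) (scl H) \<beta> \<Longrightarrow> sum_list (map (\<lambda>(x,y). \<beta> x y) (smash A H ra la f (one A, one H) (c, g))) = \<beta> c g"
  apply (frule bilD(1)) apply (frule bilD(2)) apply (frule bilD(3)) apply (frule bilD(4))
  by (simp add: ENG, (simp add: CNT)?)

lemma unit_list: "teq2 (scl A) (scl H) (smul A H ra la f [(one A, one H)] xs) xs"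
  "teq2 (scl A) (scl H) (smul A H ra la f xs [(one A, one H)]) xs"
  unfolding teq2_def
   apply (intro allI impI)
  subgoal premises p for \<beta>
    apply (simp only: smul_sum)
    apply (simp add: form2_iff[OF vsA vsH] p)
    apply (rule slc)
    subgoal for x by (cases x) (simp add: UNIT_L[OF p[unfolded form2_iff[OF vsA vsH]]])
    done
   apply (intro allI impI)
  subgoal premises p for \<beta>
    apply (simp only: smul_sum)
    apply (rule slc)
    subgoal for x by (cases x) (simp add: UNIT_R[OF p[unfolded form2_iff[OF vsA vsH]]])
    done
  done

lemma coassoc_T: "teq6 (scl A) (scl H) (scl A) (scl H) (scl A) (scl H)
          [(a11, h11, a12, h12, a2, h2). (a1, h1, a2, h2) \<leftarrow> copT A H xs,
               (a11, h11, a12, h12) \<leftarrow> copT A H [(a1, h1)]]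
          [(a1, h1, a21, h21, a22, h22). (a1, h1, a2, h2) \<leftarrow> copT A H xs,
               (a21, h21, a22, h22) \<leftarrow> copT A H [(a2, h2)]]"
  unfolding teq6_def copT_def
  apply (intro allI impI)
  subgoal premises p for \<beta> by (simp add: ENG form6D[OF p])
  done

lemma counit_T: "teq2 (scl A) (scl H) [(scl A (cou A a1 * cou H h1) a2, h2). (a1, h1, a2, h2) \<leftarrow> copT A H xs] xs"
  "teq2 (scl A) (scl H) [(scl A (cou A a2 * cou H h2) a1, h1). (a1, h1, a2, h2) \<leftarrow> copT A H xs] xs"
  unfolding teq2_def copT_def
   apply (intro allI impI)
  subgoal premises p for \<beta> using bilD[OF p[unfolded form2_iff[OF vsA vsH]]] by (simp add: ENG, (simp add: CNT)?)
   apply (intro allI impI)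
  subgoal premises p for \<beta> using bilD[OF p[unfolded form2_iff[OF vsA vsH]]] by (simp add: ENG, (simp add: CNT)?)
  done

lemma copT_one: "teq4 (scl A) (scl H) (scl A) (scl H) (copT A H [(one A, one H)]) [(one A, one H, one A, one H)]"
  unfolding teq4_def copT_def
  apply (intro allI impI)
  subgoal premises p for \<beta> by (simp add: ENG form4D[OF p])
  done

end

context conv begin

lemma DMUL2:
  assumes b: "form4 (scl A) (scl H) (scl A) (scl H) \<beta>"
  shows "sum_list (map (\<lambda>(x,y). sum_list (map (\<lambda>(x1,x2). sum_list (map (\<lambda>(y1,y2). \<beta> x1 y1 x2 y2)
       (cop H y))) (cop A x))) (smash A H ra la f p q))
   = (case p of (a,h) \<Rightarrow> case q of (c, g) \<Rightarrow> sum_list (map (\<lambda>(a1,a2). sum_list (map (\<lambda>(h1,h2). sum_list (map (\<lambda>(c1,c2). sum_list (map (\<lambda>(g1,g2).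
       sum_list (map (\<lambda>(x,y). sum_list (map (\<lambda>(x',y'). \<beta> x y x' y') (smash A H ra la f (a2, h2) (c2, g2))))
        (smash A H ra la f (a1, h1) (c1, g1)))
      ) (cop H g))) (cop A c))) (cop H h))) (cop A a)))"
  by (cases p; cases q) (simp only: prod.case DMUL[OF b])

lemma dmul_list: "teq4 (scl A) (scl H) (scl A) (scl H) (copT A H (smul A H ra la f xs ys)) (prodT A H ra la f (copT A H xs) (copT A H ys))"
  unfolding teq4_def
  apply (intro allI impI)
  subgoal premises p for \<beta>
    apply (simp only: copT_def prodT_def sw_simps smul_sum prod.case)
    apply (simp only: DMUL2[OF p])
    apply (rule slc)
    subgoal for x
      apply (cases x)
      subgoal for a h
        apply (simp only: prod.case)
        apply (simp only: sl_swap[where N="cop H h"])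
        apply (simp only: sl_swap[where N="cop A a"])
        done
      done
    done
  done

lemma ASSOC2: "bil (scl A) (scl H) \<beta> \<Longrightarrow>
  sum_list (map (\<lambda>t. sum_list (map (\<lambda>(x,y). \<beta> x y) (smash A H ra la f t r))) (smash A H ra la f p q)) =
  sum_list (map (\<lambda>t. sum_list (map (\<lambda>(x,y). \<beta> x y) (smash A H ra la f p t))) (smash A H ra la f q r))"
  apply (cases p; cases q; cases r)
  using ASSOC[where \<beta>=\<beta>] by (simp add: split_beta')

lemma assoc_list: "teq2 (scl A) (scl H) (smul A H ra la f (smul A H ra la f xs ys) zs) (smul A H ra la f xs (smul A H ra la f ys zs))"
  unfolding teq2_def
proof (intro allI impI)
  fix \<beta> assume "form2 (scl A) (scl H) \<beta>"
  then have b: "bil (scl A) (scl H) \<beta>" using form2_iff vsA vsH by blast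
  show "sum_list (map (\<lambda>(x1,x2). \<beta> x1 x2) (smul A H ra la f (smul A H ra la f xs ys) zs)) =
        sum_list (map (\<lambda>(x1,x2). \<beta> x1 x2) (smul A H ra la f xs (smul A H ra la f ys zs)))"
    apply (simp only: smul_sum)
    apply (rule slc, rule slc)
    apply (subst sw_gen)
    apply (rule slc)
    apply (rule ASSOC2[OF b])
    done
qed

lemma COU: "sum_list (map (\<lambda>(x,y). cou A x * cou H y) (smash A H ra la f (a,h) (c,g))) = (cou A a * cou H h) * (cou A c * cou H g)"
proof -
  have b: "bil (scl A) (scl H) (\<lambda>x y. cou A x * cou H y)" by (simp add: bil_def algebra_simps)
  show ?thesis by (simp add: ENG smash_eval[OF b], (simp add: CNT)?)
qed

lemma cou_list: "couT A H (smul A H ra la f xs ys) = couT A H xs * couT A H ys"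
  unfolding couT_def
  apply (simp only: smul_sum sl_prod)
  apply (rule slc, rule slc)
  subgoal for p q by (cases p; cases q) (simp only: prod.case COU)
  done

theorem conv_main: "bialg_ext A H ra la f"
  unfolding bialg_ext_def Let_def
  apply (intro conjI allI)
  apply (rule assoc_list)
  apply (rule unit_list(1))
  apply (rule unit_list(2))
  apply (rule coassoc_T)
  apply (rule counit_T(1))
  apply (rule counit_T(2))
  apply (rule dmul_list)
  apply (rule copT_one)
  apply (rule cou_list)
  apply (simp add: couT_def)
  done

end


lemma separate:
  assumes vs: "vector_space s" and eq: "\<And>\<phi>. lin_form s \<phi> \<Longrightarrow> \<phi> x = \<phi> y"
  shows "x = y"
proof (rule ccontr)
  assume ne: "x \<noteq> y"
  interpret vp: vector_space_pair s "(*) :: 'a \<Rightarrow> 'a \<Rightarrow> 'a"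
    using vs vs_field by (simp add: vector_space_pair_def)
  let ?v = "x - y"
  have ind: "vp.vs1.independent {?v}" using ne by simp
  let ?\<phi> = "vp.construct {?v} (\<lambda>_. 1)"
  have lin: "Vector_Spaces.linear s (*) ?\<phi>" by (rule vp.linear_construct[OF ind])
  have v1: "?\<phi> ?v = 1" using vp.construct_basis[OF ind] by simp
  have "?\<phi> x = ?\<phi> y" using eq lin unfolding lin_form_def by blast
  moreover have "?\<phi> ?v = ?\<phi> x - ?\<phi> y"
    using lin unfolding linear_iff by (metis add_diff_cancel diff_add_cancel)
  ultimately show False using v1 by simp
qed

lemma form4I:
  assumes "vector_space s1" "vector_space s2" "vector_space s3" "vector_space s4"
    "\<forall>x x' y z w. \<beta> (x + x') y z w = \<beta> x y z w + \<beta> x' y z w"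
    "\<forall>x y y' z w. \<beta> x (y + y') z w = \<beta> x y z w + \<beta> x y' z w"
    "\<forall>x y z z' w. \<beta> x y (z + z') w = \<beta> x y z w + \<beta> x y z' w"
    "\<forall>x y z w w'. \<beta> x y z (w + w') = \<beta> x y z w + \<beta> x y z w'"
    "\<forall>c x y z w. \<beta> (s1 c x) y z w = c * \<beta> x y z w"
    "\<forall>c x y z w. \<beta> x (s2 c y) z w = c * \<beta> x y z w"
    "\<forall>c x y z w. \<beta> x y (s3 c z) w = c * \<beta> x y z w"
    "\<forall>c x y z w. \<beta> x y z (s4 c w) = c * \<beta> x y z w"
  shows "form4 s1 s2 s3 s4 \<beta>"
  using assms unfolding form4_def lin_form_def linear_iff using vs_field by auto

locale fwd = xctx +
  assumes be: "bialg_ext A H ra la f"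
begin

lemma E_assoc: "teq2 (scl A) (scl H) (smul A H ra la f (smul A H ra la f xs ys) zs) (smul A H ra la f xs (smul A H ra la f ys zs))"
  using be unfolding bialg_ext_def Let_def by blast
lemma E_dmul: "teq4 (scl A) (scl H) (scl A) (scl H) (copT A H (smul A H ra la f xs ys)) (prodT A H ra la f (copT A H xs) (copT A H ys))"
  using be unfolding bialg_ext_def Let_def by blast
lemma E_cou: "couT A H (smul A H ra la f xs ys) = couT A H xs * couT A H ys"
  using be unfolding bialg_ext_def Let_def by blast
lemma E_cou1: "couT A H [(one A, one H)] = 1"
  using be unfolding bialg_ext_def Let_def by blast

lemma couH_one[simp]: "cou H (one H) = 1"
  using E_cou1 by (simp add: couT_def)

lemma couH_mul[simp]: "cou H (mul H g h) = cou H g * cou H h"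
proof -
  have b: "bil (scl A) (scl H) (\<lambda>x y. cou A x * cou H y)" by (simp add: bil_def algebra_simps)
  have "couT A H (smul A H ra la f [(one A, g)] [(one A, h)]) = cou H (mul H g h)"
    unfolding couT_def smul_def by (simp add: ENG smash_eval[OF b], (simp add: CNT)?)
  then show ?thesis using E_cou[of "[(one A, g)]" "[(one A, h)]"] by (simp add: couT_def)
qed

lemma smash_eval_gen[simp]: "bil (scl A) (scl H) \<beta> \<Longrightarrow> sum_list (map (\<lambda>(x,y). \<beta> x y) (smash A H ra la f p q)) =
   (case p of (a,h) \<Rightarrow> case q of (c,g) \<Rightarrow>
   sum_list (map (\<lambda>(hh,h3). sum_list (map (\<lambda>(h1,h2). sum_list (map (\<lambda>(g1,g2).
      \<beta> (mul A a (mul A (la h1 c) (f h2 g1))) (mul H h3 g2)) (cop H g))) (cop H hh))) (cop H h)))"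
  by (cases p; cases q) (simp only: prod.case smash_eval)

lemma assoc_inst: "bil (scl A) (scl H) \<beta> \<Longrightarrow>
  sum_list (map (\<lambda>(x,y). \<beta> x y) (smul A H ra la f (smul A H ra la f [p] [q]) [r])) =
  sum_list (map (\<lambda>(x,y). \<beta> x y) (smul A H ra la f [p] (smul A H ra la f [q] [r])))"
  using E_assoc[of "[p]" "[q]" "[r]"] unfolding teq2_def by (simp add: form2_iff[OF vsA vsH])

lemma dmul_inst: "form4 (scl A) (scl H) (scl A) (scl H) \<beta> \<Longrightarrow>
  sum_list (map (\<lambda>(x1,x2,x3,x4). \<beta> x1 x2 x3 x4) (copT A H (smul A H ra la f [p] [q]))) =
  sum_list (map (\<lambda>(x1,x2,x3,x4). \<beta> x1 x2 x3 x4) (prodT A H ra la f (copT A H [p]) (copT A H [q])))"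
  using E_dmul[of "[p]" "[q]"] unfolding teq4_def by blast

lemma mH_assoc: "mul H (mul H g h) l = mul H g (mul H h l)"
proof (rule separate[OF vsH])
  fix \<phi> assume p: "lin_form (scl H) \<phi>"
  note pp[simp] = linD[OF p]
  have b: "bil (scl A) (scl H) (\<lambda>x y. cou A x * \<phi> y)" by (simp add: bil_def algebra_simps)
  have 1: "sum_list (map (\<lambda>(x,y). cou A x * \<phi> y) (smul A H ra la f (smul A H ra la f [(one A, g)] [(one A, h)]) [(one A, l)]))
     = \<phi> (mul H (mul H g h) l)"
    unfolding smul_def by (simp add: ENG, (simp add: CNT)?)
  have 2: "sum_list (map (\<lambda>(x,y). cou A x * \<phi> y) (smul A H ra la f [(one A, g)] (smul A H ra la f [(one A, h)] [(one A, l)])))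
     = \<phi> (mul H g (mul H h l))"
    unfolding smul_def by (simp add: ENG, (simp add: CNT)?)
  show "\<phi> (mul H (mul H g h) l) = \<phi> (mul H g (mul H h l))" using 1 2 assoc_inst[OF b] by simp
qed

lemma copH_mul_fwd: "teq2 (scl H) (scl H) (cop H (mul H x y)) [(mul H x1 y1, mul H x2 y2). (x1, x2) \<leftarrow> cop H x, (y1, y2) \<leftarrow> cop H y]"
  unfolding teq2_def
proof (intro allI impI)
  fix \<beta> assume "form2 (scl H) (scl H) \<beta>"
  then have b: "bil (scl H) (scl H) \<beta>" using form2_iff vsH by blast
  note bb[simp] = bilD[OF b]
  have f4: "form4 (scl A) (scl H) (scl A) (scl H) (\<lambda>x1 y1 x2 y2. cou A x1 * \<beta> y1 y2 * cou A x2)"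
    by (rule form4I[OF vsA vsH vsA vsH]) (simp_all add: algebra_simps)
  have 1: "sum_list (map (\<lambda>(x1,x2,x3,x4). cou A x1 * \<beta> x2 x4 * cou A x3) (copT A H (smul A H ra la f [(one A, x)] [(one A, y)])))
    = sum_list (map (\<lambda>(u,v). \<beta> u v) (cop H (mul H x y)))"
    unfolding smul_def copT_def by (simp add: ENG, (simp add: CNT)?)
  have 2: "sum_list (map (\<lambda>(x1,x2,x3,x4). cou A x1 * \<beta> x2 x4 * cou A x3) (prodT A H ra la f (copT A H [(one A, x)]) (copT A H [(one A, y)])))
    = sum_list (map (\<lambda>(x1,x2). \<beta> x1 x2) [(mul H x1 y1, mul H x2 y2). (x1, x2) \<leftarrow> cop H x, (y1, y2) \<leftarrow> cop H y])"
    unfolding prodT_def copT_def by (simp add: ENG, (simp add: CNT)?)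
  show "sum_list (map (\<lambda>(x1,x2). \<beta> x1 x2) (cop H (mul H x y))) =
        sum_list (map (\<lambda>(x1,x2). \<beta> x1 x2) [(mul H x1 y1, mul H x2 y2). (x1, x2) \<leftarrow> cop H x, (y1, y2) \<leftarrow> cop H y])"
    using 1 2 dmul_inst[OF f4, of "(one A, x)" "(one A, y)"] by simp
qed

lemma phi_sum: "lin_form s \<phi> \<Longrightarrow> \<phi> (sum_list (map (\<lambda>(u,v). F u v) L)) = sum_list (map (\<lambda>(u,v). \<phi> (F u v)) L)"
  apply (rule pull_sum)
  using linD(1)[of s \<phi>] apply simp
  using linD(1)[of s \<phi> 0 0] by (intro self_add_zero) simp

lemma meas_fwd: "la g (mul A a b) = sum_list [mul A (la g1 a) (la g2 b). (g1, g2) \<leftarrow> cop H g]"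
proof (rule separate[OF vsA])
  fix \<phi> assume p: "lin_form (scl A) \<phi>"
  note pp[simp] = linD[OF p] phi_sum[OF p]
  have b: "bil (scl A) (scl H) (\<lambda>x y. \<phi> x * cou H y)" by (simp add: bil_def algebra_simps)
  have 1: "sum_list (map (\<lambda>(x,y). \<phi> x * cou H y) (smul A H ra la f (smul A H ra la f [(one A, g)] [(a, one H)]) [(b, one H)]))
     = \<phi> (sum_list [mul A (la g1 a) (la g2 b). (g1, g2) \<leftarrow> cop H g])"
    unfolding smul_def by (simp add: ENG, (simp add: CNT)?)
  have 2: "sum_list (map (\<lambda>(x,y). \<phi> x * cou H y) (smul A H ra la f [(one A, g)] (smul A H ra la f [(a, one H)] [(b, one H)])))
     = \<phi> (la g (mul A a b))"
    unfolding smul_def by (simp add: ENG, (simp add: CNT)?)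
  show "\<phi> (la g (mul A a b)) = \<phi> (sum_list [mul A (la g1 a) (la g2 b). (g1, g2) \<leftarrow> cop H g])"
    using 1 2 assoc_inst[OF b] by simp
qed

lemma c1_fwd: "sum_list [mul A (la g1 (la h1 a)) (f g2 h2). (g1, g2) \<leftarrow> cop H g, (h1, h2) \<leftarrow> cop H h]
             = sum_list [mul A (f g1 h1) (la (mul H g2 h2) a). (g1, g2) \<leftarrow> cop H g, (h1, h2) \<leftarrow> cop H h]"
proof (rule separate[OF vsA])
  fix \<phi> assume p: "lin_form (scl A) \<phi>"
  note pp[simp] = linD[OF p] phi_sum[OF p]
  have b: "bil (scl A) (scl H) (\<lambda>x y. \<phi> x * cou H y)" by (simp add: bil_def algebra_simps)
  have 1: "sum_list (map (\<lambda>(x,y). \<phi> x * cou H y) (smul A H ra la f (smul A H ra la f [(one A, g)] [(one A, h)]) [(a, one H)]))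
     = \<phi> (sum_list [mul A (f g1 h1) (la (mul H g2 h2) a). (g1, g2) \<leftarrow> cop H g, (h1, h2) \<leftarrow> cop H h])"
    unfolding smul_def by (simp add: ENG, (simp add: CNT)?)
  have 2: "sum_list (map (\<lambda>(x,y). \<phi> x * cou H y) (smul A H ra la f [(one A, g)] (smul A H ra la f [(one A, h)] [(a, one H)])))
     = \<phi> (sum_list [mul A (la g1 (la h1 a)) (f g2 h2). (g1, g2) \<leftarrow> cop H g, (h1, h2) \<leftarrow> cop H h])"
    unfolding smul_def 
    apply (simp add: ENG)
    apply ((simp add: CNT)?)
    apply (simp only: sl_swap[where N="cop H g"])
    done
  show "\<phi> (sum_list [mul A (la g1 (la h1 a)) (f g2 h2). (g1, g2) \<leftarrow> cop H g, (h1, h2) \<leftarrow> cop H h]) =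
    \<phi> (sum_list [mul A (f g1 h1) (la (mul H g2 h2) a). (g1, g2) \<leftarrow> cop H g, (h1, h2) \<leftarrow> cop H h])"
    using 1 2 assoc_inst[OF b] by simp
qed

lemma c2_fwd: "sum_list [mul A (la g1 (f h1 l1)) (f g2 (mul H h2 l2)).
                          (g1, g2) \<leftarrow> cop H g, (h1, h2) \<leftarrow> cop H h, (l1, l2) \<leftarrow> cop H l]
             = sum_list [mul A (f g1 h1) (f (mul H g2 h2) l). (g1, g2) \<leftarrow> cop H g, (h1, h2) \<leftarrow> cop H h]"
proof (rule separate[OF vsA])
  fix \<phi> assume p: "lin_form (scl A) \<phi>"
  note pp[simp] = linD[OF p] phi_sum[OF p]
  have b: "bil (scl A) (scl H) (\<lambda>x y. \<phi> x * cou H y)" by (simp add: bil_def algebra_simps)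
  have 1: "sum_list (map (\<lambda>(x,y). \<phi> x * cou H y) (smul A H ra la f (smul A H ra la f [(one A, g)] [(one A, h)]) [(one A, l)]))
     = \<phi> (sum_list [mul A (f g1 h1) (f (mul H g2 h2) l). (g1, g2) \<leftarrow> cop H g, (h1, h2) \<leftarrow> cop H h])"
    unfolding smul_def by (simp add: ENG, (simp add: CNT)?)
  have 2: "sum_list (map (\<lambda>(x,y). \<phi> x * cou H y) (smul A H ra la f [(one A, g)] (smul A H ra la f [(one A, h)] [(one A, l)])))
     = \<phi> (sum_list [mul A (la g1 (f h1 l1)) (f g2 (mul H h2 l2)).
                          (g1, g2) \<leftarrow> cop H g, (h1, h2) \<leftarrow> cop H h, (l1, l2) \<leftarrow> cop H l])"
    unfolding smul_def
    apply (simp add: ENG)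
    apply ((simp add: CNT)?)
    apply (simp only: sl_swap[where N="cop H g"])
    done
  show "\<phi> (sum_list [mul A (la g1 (f h1 l1)) (f g2 (mul H h2 l2)).
                          (g1, g2) \<leftarrow> cop H g, (h1, h2) \<leftarrow> cop H h, (l1, l2) \<leftarrow> cop H l]) =
    \<phi> (sum_list [mul A (f g1 h1) (f (mul H g2 h2) l). (g1, g2) \<leftarrow> cop H g, (h1, h2) \<leftarrow> cop H h])"
    using 1 2 assoc_inst[OF b] by simp
qed

lemma c4_fwd: "teq2 (scl H) (scl A) [(g1, la g2 a). (g1, g2) \<leftarrow> cop H g] [(g2, la g1 a). (g1, g2) \<leftarrow> cop H g]"
  unfolding teq2_def
proof (intro allI impI)
  fix \<beta> assume "form2 (scl H) (scl A) \<beta>"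
  then have b: "bil (scl H) (scl A) \<beta>" using form2_iff vsH vsA by blast
  note bb[simp] = bilD[OF b]
  have f4: "form4 (scl A) (scl H) (scl A) (scl H) (\<lambda>x1 y1 x2 y2. cou A x1 * \<beta> y1 x2 * cou H y2)"
    by (rule form4I[OF vsA vsH vsA vsH]) (simp_all add: algebra_simps)
  have 1: "sum_list (map (\<lambda>(x1,x2,x3,x4). cou A x1 * \<beta> x2 x3 * cou H x4) (copT A H (smul A H ra la f [(one A, g)] [(a, one H)])))
    = sum_list (map (\<lambda>(x1,x2). \<beta> x1 x2) [(g2, la g1 a). (g1, g2) \<leftarrow> cop H g])"
    unfolding smul_def copT_def
    by (simp add: ENG, (simp add: CNT)?)
  have 2: "sum_list (map (\<lambda>(x1,x2,x3,x4). cou A x1 * \<beta> x2 x3 * cou H x4) (prodT A H ra la f (copT A H [(one A, g)]) (copT A H [(a, one H)])))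
    = sum_list (map (\<lambda>(x1,x2). \<beta> x1 x2) [(g1, la g2 a). (g1, g2) \<leftarrow> cop H g])"
    unfolding prodT_def copT_def
    by (simp add: ENG, (simp add: CNT)?)
  show "sum_list (map (\<lambda>(x1,x2). \<beta> x1 x2) [(g1, la g2 a). (g1, g2) \<leftarrow> cop H g]) =
        sum_list (map (\<lambda>(x1,x2). \<beta> x1 x2) [(g2, la g1 a). (g1, g2) \<leftarrow> cop H g])"
    using 1 2 dmul_inst[OF f4, of "(one A, g)" "(a, one H)"] by simp
qed

lemma c5_fwd: "teq2 (scl H) (scl A)
                     [(mul H g1 h1, f g2 h2). (g1, g2) \<leftarrow> cop H g, (h1, h2) \<leftarrow> cop H h]
                     [(mul H g2 h2, f g1 h1). (g1, g2) \<leftarrow> cop H g, (h1, h2) \<leftarrow> cop H h]"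
  unfolding teq2_def
proof (intro allI impI)
  fix \<beta> assume "form2 (scl H) (scl A) \<beta>"
  then have b: "bil (scl H) (scl A) \<beta>" using form2_iff vsH vsA by blast
  note bb[simp] = bilD[OF b]
  have f4: "form4 (scl A) (scl H) (scl A) (scl H) (\<lambda>x1 y1 x2 y2. cou A x1 * \<beta> y1 x2 * cou H y2)"
    by (rule form4I[OF vsA vsH vsA vsH]) (simp_all add: algebra_simps)
  have 1: "sum_list (map (\<lambda>(x1,x2,x3,x4). cou A x1 * \<beta> x2 x3 * cou H x4) (copT A H (smul A H ra la f [(one A, g)] [(one A, h)])))
    = sum_list (map (\<lambda>(x1,x2). \<beta> x1 x2) [(mul H g2 h2, f g1 h1). (g1, g2) \<leftarrow> cop H g, (h1, h2) \<leftarrow> cop H h])"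
    unfolding smul_def copT_def
    by (simp add: ENG, (simp add: CNT)?)
  have 2: "sum_list (map (\<lambda>(x1,x2,x3,x4). cou A x1 * \<beta> x2 x3 * cou H x4) (prodT A H ra la f (copT A H [(one A, g)]) (copT A H [(one A, h)])))
    = sum_list (map (\<lambda>(x1,x2). \<beta> x1 x2) [(mul H g1 h1, f g2 h2). (g1, g2) \<leftarrow> cop H g, (h1, h2) \<leftarrow> cop H h])"
    unfolding prodT_def copT_def
    by (simp add: ENG, (simp add: CNT)?)
  show "sum_list (map (\<lambda>(x1,x2). \<beta> x1 x2) [(mul H g1 h1, f g2 h2). (g1, g2) \<leftarrow> cop H g, (h1, h2) \<leftarrow> cop H h]) =
        sum_list (map (\<lambda>(x1,x2). \<beta> x1 x2) [(mul H g2 h2, f g1 h1). (g1, g2) \<leftarrow> cop H g, (h1, h2) \<leftarrow> cop H h])"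
    using 1 2 dmul_inst[OF f4, of "(one A, g)" "(one A, h)"] by simp
qed

lemma bialgH_fwd: "bialg H"
  unfolding bialg_def alg_def
  using vsH mH_bil mH_one mH_assoc coH copH_mul_fwd couH_mul couH_one ed
  unfolding ext_datum_def by blast

end

context xctx begin

lemma crossed: "teq2 (scl A) (scl H) (smash A H ra la f (a, h) (c, g))
               [(mul A (mul A a (la h1 c)) (f h2 g1), mul H h3 g2).
                  (h1, h2, h3) \<leftarrow> cop3 H h, (g1, g2) \<leftarrow> cop H g]"
  unfolding teq2_def
  apply (intro allI impI)
  subgoal premises p for \<beta>
    by (simp add: smash_eval[OF p[unfolded form2_iff[OF vsA vsH]]] cop3_def sl_concat map_concat map_map o_def prod.case_distrib)
  done

end

theorem mainTheorem3:
  fixes A :: "('k::field, 'a::ab_group_add) bistr"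
    and H :: "('k, 'h::ab_group_add) bistr"
    and ra :: "'h \<Rightarrow> 'a \<Rightarrow> 'h" and la :: "'h \<Rightarrow> 'a \<Rightarrow> 'a" and f :: "'h \<Rightarrow> 'h \<Rightarrow> 'a"
  assumes "bialg A"
    and "ext_datum A H ra la f"
    and "\<forall>h a. ra h a = scl H (cou A a) h"
  shows "(bialg_ext A H ra la f \<longleftrightarrow>
            bialg H
          \<and> (\<forall>g h a.
               sum_list [mul A (la g1 (la h1 a)) (f g2 h2). (g1, g2) \<leftarrow> cop H g, (h1, h2) \<leftarrow> cop H h]
             = sum_list [mul A (f g1 h1) (la (mul H g2 h2) a). (g1, g2) \<leftarrow> cop H g, (h1, h2) \<leftarrow> cop H h])
          \<and> (\<forall>g h l.
               sum_list [mul A (la g1 (f h1 l1)) (f g2 (mul H h2 l2)).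
                          (g1, g2) \<leftarrow> cop H g, (h1, h2) \<leftarrow> cop H h, (l1, l2) \<leftarrow> cop H l]
             = sum_list [mul A (f g1 h1) (f (mul H g2 h2) l). (g1, g2) \<leftarrow> cop H g, (h1, h2) \<leftarrow> cop H h])
          \<and> (\<forall>g a b. la g (mul A a b) = sum_list [mul A (la g1 a) (la g2 b). (g1, g2) \<leftarrow> cop H g])
          \<and> (\<forall>g a. teq2 (scl H) (scl A) [(g1, la g2 a). (g1, g2) \<leftarrow> cop H g]
                                        [(g2, la g1 a). (g1, g2) \<leftarrow> cop H g])
          \<and> (\<forall>g h. teq2 (scl H) (scl A)
                     [(mul H g1 h1, f g2 h2). (g1, g2) \<leftarrow> cop H g, (h1, h2) \<leftarrow> cop H h]
                     [(mul H g2 h2, f g1 h1). (g1, g2) \<leftarrow> cop H g, (h1, h2) \<leftarrow> cop H h]))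
       \<and> (bialg_ext A H ra la f \<longrightarrow>
            (\<forall>a h c g. teq2 (scl A) (scl H) (smash A H ra la f (a, h) (c, g))
               [(mul A (mul A a (la h1 c)) (f h2 g1), mul H h3 g2).
                  (h1, h2, h3) \<leftarrow> cop3 H h, (g1, g2) \<leftarrow> cop H g]))"
proof -
  have X: "xctx A H ra la f" using assms by (simp add: xctx_def)
  show ?thesis
    apply (rule conjI)
     apply (rule iffI)
    subgoal premises be
    proof -
      have "fwd A H ra la f" using X be by (simp add: fwd_def fwd_axioms_def)
      then interpret fwd A H ra la f .
      show ?thesis using bialgH_fwd c1_fwd c2_fwd meas_fwd c4_fwd c5_fwd by blast
    qed
    subgoal premises r
    proof -
      have "conv A H ra la f" using X r by (simp add: conv_def conv_axioms_def)
      then interpret conv A H ra la f .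
      show ?thesis by (rule conv_main)
    qed
    subgoal
    proof -
      interpret xctx A H ra la f by (rule X)
      show ?thesis using crossed by blast
    qed
    done
qed


end
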